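(* Let $V_1,\dots,V_{15}$, $w_1,\dots,w_{15}$ and the quantum permutation matrix $u$ with diagonal blocks $u^{(i)}$ be as described in the context. Let $i\neq j$, $k,s\in V_i$ and $l,t\in V_j$. (i) If $d(k,l)=d(s,t)$, then $u^{(i)}_{ks}u^{(j)}_{lt}=0$ if and only if $\langle w_i,w_j\rangle=0$. (ii) If $d(k,l)\neq d(s,t)$, then $u^{(i)}_{ks}u^{(j)}_{lt}=0$ if and only if $\langle w_i,w_j\rangle\neq0$.
   Context: The $E_8$ root system $\Psi_{E_8}\subset\mathbb{R}^8$ consists of the 240 vectors $\pm e_i\pm e_j$ ($1\le i<j\le 8$) and all $x\in\{\pm1\}^8$ with $\prod_i x_i=1$. $G_{E_8}$ is the graph with vertices $v_x$, $x\in\Psi_{E_8}$, where $v_x=v_{-x}$, and $v_x\sim v_y$ iff $\langle x,y\rangle=0$; $d(a,b)$ is graph distance in $G_{E_8}$. Let $I=\mathrm{diag}(1,1)$, $X=\begin{pmatrix}0&1\\1&0\end{pmatrix}$, $Z=\mathrm{diag}(1,-1)$, $Y=XZ$. For $M=M_1\otimes M_2\otimes M_3$ with $M_i\in\{I,X,Y,Z\}$, $\sigma_M:v_x\mapsto v_{Mx}$ is an automorphism of $G_{E_8}$ and $L=\{\sigma_M\}\cong\mathbb{Z}_2^6$. Let $V_1,\dots,V_{15}$ be the 15 orbits of $L$ on $V(G_{E_8})$ (each of size 8). For each $i$ choose $w_i\in\Psi_{E_8}$ with $v_{w_i}\in V_i$. For $x\in\Psi_{E_8}$ let $P_x=\frac{1}{\|x\|^2}xx^*\in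 M_8(\mathbb{C})$. For $v_y,v_z\in V_i$ choose $M_{yz}=M_1\otimes M_2\otimes M_3$ ($M_k\in\{I,X,Y,Z\}$) with $M_{yz}y=\pm z$, and set $u^{(i)}_{v_yv_z}=M_{yz}P_{w_i}M_{yz}^*=P_{M_{yz}w_i}$. The matrix $u$ is block diagonal with respect to $V_1,\dots,V_{15}$ with blocks $u^{(i)}=(u^{(i)}_{v_yv_z})_{v_y,v_z\in V_i}$; it is a quantum permutation matrix with entries in $M_8(\mathbb{C})$. *)

theory Defs
  imports Complex_Main "Jordan_Normal_Form.Matrix"
begin

text \<open>Vectors in R^8 with integer coordinates are represented as int lists of length 8;
 coordinate e_i (i = 1..8) corresponds to list index i-1.\<close>

definition e8_roots :: "int list set" where
  "e8_roots =
     {x. length x = 8 \<and> set x \<subseteq> {-1,0,1} \<and> length (filter (\<lambda>a. a \<noteq> 0) x) = 2}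
   \<union> {x. length x = 8 \<and> set x \<subseteq> {-1,1} \<and> prod_list x = 1}"

definition ip :: "int list \<Rightarrow> int list \<Rightarrow> int" where
  "ip x y = (\<Sum>i<8. x ! i * y ! i)"

definition vert :: "int list \<Rightarrow> int list set" where
  "vert x = {x, map uminus x}"

definition e8_vertices :: "int list set set" where
  "e8_vertices = vert ` e8_roots"

definition e8_adj :: "int list set \<Rightarrow> int list set \<Rightarrow> bool" where
  "e8_adj p q \<longleftrightarrow> p \<in> e8_vertices \<and> q \<in> e8_vertices \<and> (\<exists>x\<in>p. \<exists>y\<in>q. ip x y = 0)"

fun e8_walk :: "nat \<Rightarrow> int list set \<Rightarrow> int list set \<Rightarrow> bool" where
  "e8_walk 0 p q = (p = q)"
| "e8_walk (Suc n) p q = (\<exists>r. e8_adj p r \<and> e8_walk n r q)"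

definition e8_dist :: "int list set \<Rightarrow> int list set \<Rightarrow> nat" where
  "e8_dist p q = (LEAST n. e8_walk n p q)"

text \<open>Pauli matrices, coded 0 = I, 1 = X, 2 = Y = XZ, 3 = Z; entry (a,b), a,b \<in> {0,1}.\<close>
definition pauli :: "nat \<Rightarrow> nat \<Rightarrow> nat \<Rightarrow> int" where
  "pauli m a b =
    (if m = 0 then (if a = b then 1 else 0)
     else if m = 1 then (if a \<noteq> b then 1 else 0)
     else if m = 2 then (if a = 0 \<and> b = 1 then -1 else if a = 1 \<and> b = 0 then 1 else 0)
     else (if a = b then (if a = 0 then 1 else -1) else 0))"

text \<open>Entry (a,b) of the Kronecker product M1 \<otimes> M2 \<otimes> M3 (8 x 8, standard index convention).\<close>
definition kron3 :: "nat \<times> nat \<times> nat \<Rightarrow> nat \<Rightarrow> nat \<Rightarrow> int" where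
  "kron3 M a b = (case M of (m1, m2, m3) \<Rightarrow>
     pauli m1 (a div 4) (b div 4) * pauli m2 ((a div 2) mod 2) ((b div 2) mod 2)
       * pauli m3 (a mod 2) (b mod 2))"

definition Lset :: "(nat \<times> nat \<times> nat) set" where
  "Lset = {0..3} \<times> {0..3} \<times> {0..3}"

definition act :: "nat \<times> nat \<times> nat \<Rightarrow> int list \<Rightarrow> int list" where
  "act M x = map (\<lambda>a. \<Sum>b<8. kron3 M a b * x ! b) [0..<8]"

definition vmap :: "nat \<times> nat \<times> nat \<Rightarrow> int list set \<Rightarrow> int list set" where
  "vmap M p = act M ` p"

definition L_orbit :: "int list set \<Rightarrow> int list set set" where
  "L_orbit p = {vmap M p | M. M \<in> Lset}"

definition proj :: "int list \<Rightarrow> complex mat" where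
  "proj x = (1 / of_int (ip x x)) \<cdot>\<^sub>m mat 8 8 (\<lambda>(i, j). of_int (x ! i * x ! j))"

end

theory Submission
  imports Defs
begin


definition pa :: "nat \<Rightarrow> int \<Rightarrow> int \<Rightarrow> int \<times> int" where
  "pa m u v = (if m = 0 then (u,v) else if m = 1 then (v,u) else if m = 2 then (-v,u) else (u,-v))"

fun r3 :: "nat \<Rightarrow> int list \<Rightarrow> int list" where
  "r3 m (a#b#r) = fst (pa m a b) # snd (pa m a b) # r3 m r" | "r3 m r = r"
fun r2 :: "nat \<Rightarrow> int list \<Rightarrow> int list" where
  "r2 m (a#b#c#d#r) = fst (pa m a c) # fst (pa m b d) # snd (pa m a c) # snd (pa m b d) # r2 m r" | "r2 m r = r"
fun r1 :: "nat \<Rightarrow> int list \<Rightarrow> int list" where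
  "r1 m (a0#a1#a2#a3#a4#a5#a6#a7#r) = [fst (pa m a0 a4), fst (pa m a1 a5), fst (pa m a2 a6), fst (pa m a3 a7),
      snd (pa m a0 a4), snd (pa m a1 a5), snd (pa m a2 a6), snd (pa m a3 a7)]" | "r1 m r = r"

definition BB :: "nat \<times> nat \<times> nat \<Rightarrow> int list \<Rightarrow> int list" where
  "BB M x = (case M of (m1,m2,m3) \<Rightarrow> r1 m1 (r2 m2 (r3 m3 x)))"

definition neg :: "int list \<Rightarrow> int list" where "neg x = map uminus x"
definition pm :: "int list \<Rightarrow> int list \<Rightarrow> bool" where "pm u v = (u = v \<or> u = neg v)"

definition mul1 :: "nat \<Rightarrow> nat \<Rightarrow> nat" where
  "mul1 m n = (if m = 0 then n else if n = 0 then m else if m = n then 0 else 6 - m - n)"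
definition mulL :: "nat \<times> nat \<times> nat \<Rightarrow> nat \<times> nat \<times> nat \<Rightarrow> nat \<times> nat \<times> nat" where
  "mulL M N = (case M of (m1,m2,m3) \<Rightarrow> case N of (n1,n2,n3) \<Rightarrow> (mul1 m1 n1, mul1 m2 n2, mul1 m3 n3))"

fun ipL :: "int list \<Rightarrow> int list \<Rightarrow> int" where
  "ipL (a#x) (b#y) = a*b + ipL x y" | "ipL _ _ = 0"
definition chi :: "nat \<Rightarrow> nat \<Rightarrow> bool" where "chi k m = (k \<noteq> 0 \<and> m \<noteq> 0 \<and> m \<noteq> k)"
definition lam :: "nat \<times> nat \<times> nat \<Rightarrow> nat \<times> nat \<times> nat \<Rightarrow> bool" where
  "lam K P = (case K of (k1,k2,k3) \<Rightarrow> case P of (p1,p2,p3) \<Rightarrow> (chi k1 p1 \<noteq> (chi k2 p2 \<noteq> chi k3 p3)))"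
definition Llist :: "(nat \<times> nat \<times> nat) list" where
  "Llist = concat (map (\<lambda>a. concat (map (\<lambda>b. map (\<lambda>c. (a,b,c)) [0,1,2,3]) [0,1,2,3])) [0,1,2,3])"

lemma len8: "length x = 8 \<Longrightarrow> \<exists>x0 x1 x2 x3 x4 x5 x6 x7. x = [x0,x1,x2,x3,x4,x5,x6,x7]"
  by (auto simp: length_Suc_conv numeral_eq_Suc)

lemma sum8: "(\<Sum>b<8. f b) = f 0 + f 1 + f 2 + f 3 + f 4 + f 5 + f (6::nat) + (f 7 :: int)"
  by (simp add: numeral_eq_Suc lessThan_Suc add_ac)

lemma u8: "[0..<8] = [0,1,2,3,4,5,6,7::nat]" by (simp add: upt_rec)

lemma act_expand: "act M x = map (\<lambda>a. \<Sum>b<8. kron3 M a b * x ! b) [0,1,2,3,4,5,6,7]"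
  unfolding act_def u8 ..

lemma Lset_iff: "M \<in> Lset \<longleftrightarrow> (\<exists>m1 m2 m3. M = (m1,m2,m3) \<and> m1 \<in> {0,1,2,3} \<and> m2 \<in> {0,1,2,3} \<and> m3 \<in> {0,1,2,3})"
  unfolding Lset_def by auto

lemma ip8: "ip [x0,x1,x2,x3,x4,x5,x6,x7] [y0,y1,y2,y3,y4,y5,y6,y7] = x0*y0+x1*y1+x2*y2+x3*y3+x4*y4+x5*y5+x6*y6+x7*y7"
  by (simp add: ip_def sum8)

lemma ip_ipL: "length x = 8 \<Longrightarrow> length y = 8 \<Longrightarrow> ip x y = ipL x y"
  by (auto dest!: len8 simp: ip8)

lemma pa_neg: "pa m (-a) (-b) = (- fst (pa m a b), - snd (pa m a b))"
  by (simp add: pa_def)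

lemma r1_neg: "length x = 8 \<Longrightarrow> r1 m (neg x) = neg (r1 m x)"
  by (auto dest!: len8 simp: neg_def pa_neg)
lemma r2_neg: "length x = 8 \<Longrightarrow> r2 m (neg x) = neg (r2 m x)"
  by (auto dest!: len8 simp: neg_def pa_neg)
lemma r3_neg: "length x = 8 \<Longrightarrow> r3 m (neg x) = neg (r3 m x)"
  by (auto dest!: len8 simp: neg_def pa_neg)

lemma r1_len[simp]: "length x = 8 \<Longrightarrow> length (r1 m x) = 8"
  by (auto dest!: len8)
lemma r2_len[simp]: "length x = 8 \<Longrightarrow> length (r2 m x) = 8"
  by (auto dest!: len8)
lemma r3_len[simp]: "length x = 8 \<Longrightarrow> length (r3 m x) = 8"
  by (auto dest!: len8)
lemma BB_len[simp]: "length x = 8 \<Longrightarrow> length (BB M x) = 8"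
  by (simp add: BB_def split: prod.split)
lemma neg_len[simp]: "length (neg x) = length x" by (simp add: neg_def)

lemma pa_ip: "fst (pa m a b) * fst (pa m c d) + snd (pa m a b) * snd (pa m c d) = a*c + b*d"
  by (simp add: pa_def)

lemma r1_ip: "length x = 8 \<Longrightarrow> length y = 8 \<Longrightarrow> ip (r1 m x) (r1 m y) = ip x y"
proof (auto dest!: len8 simp: ip8)
  fix x0 x1 x2 x3 x4 x5 x6 x7 y0 y1 y2 y3 y4 y5 y6 y7
  show "fst (pa m x0 x4) * fst (pa m y0 y4) + fst (pa m x1 x5) * fst (pa m y1 y5) + fst (pa m x2 x6) * fst (pa m y2 y6) +
       fst (pa m x3 x7) * fst (pa m y3 y7) + snd (pa m x0 x4) * snd (pa m y0 y4) + snd (pa m x1 x5) * snd (pa m y1 y5) +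
       snd (pa m x2 x6) * snd (pa m y2 y6) + snd (pa m x3 x7) * snd (pa m y3 y7) =
       x0 * y0 + x1 * y1 + x2 * y2 + x3 * y3 + x4 * y4 + x5 * y5 + x6 * y6 + x7 * y7"
    using pa_ip[of m x0 x4 y0 y4] pa_ip[of m x1 x5 y1 y5] pa_ip[of m x2 x6 y2 y6] pa_ip[of m x3 x7 y3 y7] by linarith
qed

lemma r2_ip: "length x = 8 \<Longrightarrow> length y = 8 \<Longrightarrow> ip (r2 m x) (r2 m y) = ip x y"
proof (auto dest!: len8 simp: ip8)
  fix x0 x1 x2 x3 x4 x5 x6 x7 y0 y1 y2 y3 y4 y5 y6 y7
  show "fst (pa m x0 x2) * fst (pa m y0 y2) + fst (pa m x1 x3) * fst (pa m y1 y3) + snd (pa m x0 x2) * snd (pa m y0 y2) +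
       snd (pa m x1 x3) * snd (pa m y1 y3) + fst (pa m x4 x6) * fst (pa m y4 y6) + fst (pa m x5 x7) * fst (pa m y5 y7) +
       snd (pa m x4 x6) * snd (pa m y4 y6) + snd (pa m x5 x7) * snd (pa m y5 y7) =
       x0 * y0 + x1 * y1 + x2 * y2 + x3 * y3 + x4 * y4 + x5 * y5 + x6 * y6 + x7 * y7"
    using pa_ip[of m x0 x2 y0 y2] pa_ip[of m x1 x3 y1 y3] pa_ip[of m x4 x6 y4 y6] pa_ip[of m x5 x7 y5 y7] by linarith
qed

lemma r3_ip: "length x = 8 \<Longrightarrow> length y = 8 \<Longrightarrow> ip (r3 m x) (r3 m y) = ip x y"
proof (auto dest!: len8 simp: ip8)
  fix x0 x1 x2 x3 x4 x5 x6 x7 y0 y1 y2 y3 y4 y5 y6 y7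
  show "fst (pa m x0 x1) * fst (pa m y0 y1) + snd (pa m x0 x1) * snd (pa m y0 y1) + fst (pa m x2 x3) * fst (pa m y2 y3) +
       snd (pa m x2 x3) * snd (pa m y2 y3) + fst (pa m x4 x5) * fst (pa m y4 y5) + snd (pa m x4 x5) * snd (pa m y4 y5) +
       fst (pa m x6 x7) * fst (pa m y6 y7) + snd (pa m x6 x7) * snd (pa m y6 y7) =
       x0 * y0 + x1 * y1 + x2 * y2 + x3 * y3 + x4 * y4 + x5 * y5 + x6 * y6 + x7 * y7"
    using pa_ip[of m x0 x1 y0 y1] pa_ip[of m x2 x3 y2 y3] pa_ip[of m x4 x5 y4 y5] pa_ip[of m x6 x7 y6 y7] by linarith
qed

lemma BB_ip: "length x = 8 \<Longrightarrow> length y = 8 \<Longrightarrow> ip (BB M x) (BB M y) = ip x y"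
  by (simp add: BB_def r1_ip r2_ip r3_ip split: prod.split)

lemma BB_neg: "length x = 8 \<Longrightarrow> BB M (neg x) = neg (BB M x)"
  by (simp add: BB_def r1_neg r2_neg r3_neg split: prod.split)

lemma m4: "(m::nat) = 0 \<or> m = 1 \<or> m = 2 \<or> (m \<noteq> 0 \<and> m \<noteq> 1 \<and> m \<noteq> 2)" by auto

lemma r13: "length x = 8 \<Longrightarrow> r3 m (r1 n x) = r1 n (r3 m x)"
  using m4[of m] m4[of n] by (auto dest!: len8 simp: pa_def)
lemma r12: "length x = 8 \<Longrightarrow> r2 m (r1 n x) = r1 n (r2 m x)"
  using m4[of m] m4[of n] by (auto dest!: len8 simp: pa_def)
lemma r23: "length x = 8 \<Longrightarrow> r3 m (r2 n x) = r2 n (r3 m x)"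
  using m4[of m] m4[of n] by (auto dest!: len8 simp: pa_def)

lemma m4b: "(m::nat) \<in> {0,1,2,3} \<Longrightarrow> m = 0 \<or> m = 1 \<or> m = 2 \<or> m = 3" by auto

lemma r1_sq: "length x = 8 \<Longrightarrow> m \<in> {0,1,2,3} \<Longrightarrow> n \<in> {0,1,2,3} \<Longrightarrow> pm (r1 m (r1 n x)) (r1 (mul1 m n) x)"
  by (auto dest!: len8 m4b simp: pa_def pm_def neg_def mul1_def)
lemma r2_sq: "length x = 8 \<Longrightarrow> m \<in> {0,1,2,3} \<Longrightarrow> n \<in> {0,1,2,3} \<Longrightarrow> pm (r2 m (r2 n x)) (r2 (mul1 m n) x)"
  by (auto dest!: len8 m4b simp: pa_def pm_def neg_def mul1_def)
lemma r3_sq: "length x = 8 \<Longrightarrow> m \<in> {0,1,2,3} \<Longrightarrow> n \<in> {0,1,2,3} \<Longrightarrow> pm (r3 m (r3 n x)) (r3 (mul1 m n) x)"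
  by (auto dest!: len8 m4b simp: pa_def pm_def neg_def mul1_def)

lemma neg_neg[simp]: "neg (neg x) = x" by (simp add: neg_def comp_def)
lemma pm_refl: "pm u u" by (simp add: pm_def)
lemma pm_sym: "pm u v \<Longrightarrow> pm v u" by (auto simp: pm_def)
lemma pm_trans: "pm u v \<Longrightarrow> pm v w \<Longrightarrow> pm u w" by (auto simp: pm_def)

lemma pm_r1: "pm u v \<Longrightarrow> length v = 8 \<Longrightarrow> pm (r1 m u) (r1 m v)" by (auto simp: pm_def r1_neg)
lemma pm_r2: "pm u v \<Longrightarrow> length v = 8 \<Longrightarrow> pm (r2 m u) (r2 m v)" by (auto simp: pm_def r2_neg)
lemma pm_r3: "pm u v \<Longrightarrow> length v = 8 \<Longrightarrow> pm (r3 m u) (r3 m v)" by (auto simp: pm_def r3_neg)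
lemma pm_BB: "pm u v \<Longrightarrow> length v = 8 \<Longrightarrow> pm (BB M u) (BB M v)" by (auto simp: pm_def BB_neg)
lemma pm_len: "pm u v \<Longrightarrow> length u = length v" by (auto simp: pm_def)

lemma m4c: "(m::nat) \<in> {0,1,2,3} \<Longrightarrow> mul1 m n \<in> {0,1,2,3} \<or> n \<notin> {0,1,2,3}"
  by (auto simp: mul1_def)

lemma BB_mul: assumes "M \<in> Lset" "N \<in> Lset" "length x = 8"
  shows "pm (BB M (BB N x)) (BB (mulL M N) x)"
proof -
  obtain m1 m2 m3 where M: "M = (m1,m2,m3)" and hm: "m1 \<in> {0,1,2,3}" "m2 \<in> {0,1,2,3}" "m3 \<in> {0,1,2,3}"
    using assms(1) unfolding Lset_iff by blast
  obtain n1 n2 n3 where N: "N = (n1,n2,n3)" and hn: "n1 \<in> {0,1,2,3}" "n2 \<in> {0,1,2,3}" "n3 \<in> {0,1,2,3}"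
    using assms(2) unfolding Lset_iff by blast
  have l: "length (r3 m3 (r3 n3 x)) = 8" "length (r2 n2 (r3 n3 x)) = 8" "length (r3 n3 x) = 8" using assms(3) by simp_all
  have e: "BB M (BB N x) = r1 m1 (r1 n1 (r2 m2 (r2 n2 (r3 m3 (r3 n3 x)))))"
    unfolding M N BB_def prod.case
    using assms(3) l by (simp only: r13 r12 r23 r1_len r2_len r3_len)
  have p3: "pm (r3 m3 (r3 n3 x)) (r3 (mul1 m3 n3) x)" using r3_sq assms(3) hm hn by blast
  have p2: "pm (r2 m2 (r2 n2 (r3 m3 (r3 n3 x)))) (r2 (mul1 m2 n2) (r3 (mul1 m3 n3) x))"
    apply (rule pm_trans[OF pm_r2[OF pm_r2[OF p3]]])
      apply (simp add: assms(3))
     apply (simp add: assms(3))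
    apply (rule r2_sq) using assms(3) hm hn by simp_all
  have p1: "pm (r1 m1 (r1 n1 (r2 m2 (r2 n2 (r3 m3 (r3 n3 x)))))) (r1 (mul1 m1 n1) (r2 (mul1 m2 n2) (r3 (mul1 m3 n3) x)))"
    apply (rule pm_trans[OF pm_r1[OF pm_r1[OF p2]]])
      apply (simp add: assms(3))
     apply (simp add: assms(3))
    apply (rule r1_sq) using assms(3) hm hn by simp_all
  show ?thesis using p1 unfolding e by (simp add: M N mulL_def BB_def)
qed

lemma Lset_mem: "(a,b,c) \<in> Lset \<longleftrightarrow> a \<le> 3 \<and> b \<le> 3 \<and> c \<le> 3" by (auto simp: Lset_def)
lemma le3: "(m::nat) \<le> 3 \<Longrightarrow> m = 0 \<or> m = 1 \<or> m = 2 \<or> m = 3" by arith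
lemma mul1_le: "m \<le> 3 \<Longrightarrow> n \<le> 3 \<Longrightarrow> mul1 m n \<le> 3" by (auto dest!: le3 simp: mul1_def)
lemma mul1_self: "mul1 m m = 0" by (simp add: mul1_def)
lemma mul1_cancel: "p \<le> 3 \<Longrightarrow> c \<le> 3 \<Longrightarrow> mul1 (mul1 p c) c = p"
  by (auto dest!: le3 simp: mul1_def)
lemma mulL_Lset: "M \<in> Lset \<Longrightarrow> N \<in> Lset \<Longrightarrow> mulL M N \<in> Lset"
  by (cases M; cases N) (simp add: mulL_def Lset_mem mul1_le)
lemma mulL_self: "mulL M M = (0,0,0)"
  by (cases M) (simp add: mulL_def mul1_self)
lemma mulL_cancel: "P \<in> Lset \<Longrightarrow> C \<in> Lset \<Longrightarrow> mulL (mulL P C) C = P"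
  by (cases P; cases C) (simp add: mulL_def Lset_mem mul1_cancel)
lemma BB_id: "length x = 8 \<Longrightarrow> BB (0,0,0) x = x"
  by (auto dest!: len8 simp: BB_def pa_def)
lemma Lset_0: "(0,0,0) \<in> Lset" by (simp add: Lset_def)

lemma chi_mul: "k \<le> 3 \<Longrightarrow> m \<le> 3 \<Longrightarrow> n \<le> 3 \<Longrightarrow> chi k (mul1 m n) = (chi k m \<noteq> chi k n)"
  by (auto dest!: le3 simp: chi_def mul1_def)
lemma lam_mul: "K \<in> Lset \<Longrightarrow> P \<in> Lset \<Longrightarrow> Q \<in> Lset \<Longrightarrow> lam K (mulL P Q) = (lam K P \<noteq> lam K Q)"
  by (cases K; cases P; cases Q) (auto simp: Lset_mem lam_def mulL_def chi_mul)

lemma nth_neg: "i < length u \<Longrightarrow> neg u ! i = - (u ! i)" by (simp add: neg_def)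
lemma ip_neg1: "length u = 8 \<Longrightarrow> ip (neg u) v = - ip u v"
  by (simp add: ip_def nth_neg sum_negf[symmetric])
lemma ip_neg2: "length v = 8 \<Longrightarrow> ip u (neg v) = - ip u v"
  by (simp add: ip_def nth_neg sum_negf[symmetric])
lemma ip_comm: "ip u v = ip v u" by (simp add: ip_def mult.commute)

lemma ip_pm1: "pm u u' \<Longrightarrow> length u' = 8 \<Longrightarrow> (ip u v = 0) = (ip u' v = 0)"
  by (auto simp: pm_def ip_neg1)
lemma ip_pm2: "pm v v' \<Longrightarrow> length v' = 8 \<Longrightarrow> (ip u v = 0) = (ip u v' = 0)"
  by (auto simp: pm_def ip_neg2)

lemma BB_adj: assumes "M \<in> Lset" "length x = 8" "length y = 8"
  shows "(ip (BB M x) y = 0) = (ip x (BB M y) = 0)"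
proof -
  have "ip (BB M x) y = ip (BB M (BB M x)) (BB M y)" using assms by (simp add: BB_ip)
  moreover have "pm (BB M (BB M x)) x" using BB_mul[OF assms(1,1,2)] mulL_self BB_id[OF assms(2)] by simp
  ultimately show ?thesis using ip_pm1 assms by simp
qed

lemma vert_neg: "vert u = {u, neg u}" by (simp add: vert_def neg_def)
lemma vert_pm: "vert u = vert v \<Longrightarrow> pm u v"
  unfolding vert_neg pm_def by (metis doubleton_eq_iff neg_neg)
lemma pm_vert: "pm u v \<Longrightarrow> vert u = vert v"
  unfolding vert_neg pm_def by auto

lemma act_neg: assumes "length x = 8" shows "act M (neg x) = neg (act M x)"
proof -
  have "(\<Sum>b<8. kron3 M a b * neg x ! b) = - (\<Sum>b<8. kron3 M a b * x ! b)" for a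
  proof -
    have "(\<Sum>b<8. kron3 M a b * neg x ! b) = (\<Sum>b<8. - (kron3 M a b * x ! b))"
      by (rule sum.cong) (auto simp: nth_neg assms)
    also have "\<dots> = - (\<Sum>b<8. kron3 M a b * x ! b)" by (rule sum_negf)
    finally show ?thesis .
  qed
  then show ?thesis unfolding act_def by (simp add: neg_def)
qed

definition nz :: "int \<Rightarrow> nat" where "nz a = (if a \<noteq> 0 then 1 else 0)"
lemma nz_neg[simp]: "nz (-a) = nz a" by (simp add: nz_def)
lemma len_filter_nz: "length (filter (\<lambda>a. a \<noteq> 0) xs) = sum_list (map nz xs)"
  by (induct xs) (auto simp: nz_def)
lemma root_len: "x \<in> e8_roots \<Longrightarrow> length x = 8" by (auto simp: e8_roots_def)

lemma root_transfer:
  assumes "x \<in> e8_roots" "length y = 8" "set y \<subseteq> set x \<union> uminus ` set x"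
    "sum_list (map nz y) = sum_list (map nz x)" "prod_list y = prod_list x"
  shows "y \<in> e8_roots"
proof -
  have c1: "set y \<subseteq> {-1,0,1}" if "set x \<subseteq> {-1,0,1}"
  proof -
    have "uminus ` set x \<subseteq> uminus ` {-1,0,1}" using that by (rule image_mono)
    moreover have "uminus ` {-1,0,1::int} = {-1,0,1}" by auto
    ultimately show ?thesis using assms(3) that by blast
  qed
  have c2: "set y \<subseteq> {-1,1}" if "set x \<subseteq> {-1,1}"
  proof -
    have "uminus ` set x \<subseteq> uminus ` {-1,1}" using that by (rule image_mono)
    moreover have "uminus ` {-1,1::int} = {-1,1}" by auto
    ultimately show ?thesis using assms(3) that by blast
  qed
  show ?thesis using assms(1,2,4,5) c1 c2 unfolding e8_roots_def len_filter_nz by auto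
qed
lemma r1_props: assumes "length x = 8"
  shows "set (r1 m x) \<subseteq> set x \<union> uminus ` set x \<and> sum_list (map nz (r1 m x)) = sum_list (map nz x) \<and> prod_list (r1 m x) = prod_list x"
proof -
  obtain x0 x1 x2 x3 x4 x5 x6 x7 where x: "x = [x0,x1,x2,x3,x4,x5,x6,x7]" using len8[OF assms] by blast
  consider "m = 0" | "m = 1" | "m = 2" | "m \<noteq> 0 \<and> m \<noteq> 1 \<and> m \<noteq> 2" by blast
  then show ?thesis unfolding x by cases (simp_all add: pa_def add_ac mult_ac)
qed
lemma r1_root: "x \<in> e8_roots \<Longrightarrow> r1 m x \<in> e8_roots"
  using root_transfer[of x "r1 m x"] r1_props[of x m] root_len[of x] by simp
lemma r2_props: assumes "length x = 8"
  shows "set (r2 m x) \<subseteq> set x \<union> uminus ` set x \<and> sum_list (map nz (r2 m x)) = sum_list (map nz x) \<and> prod_list (r2 m x) = prod_list x"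
proof -
  obtain x0 x1 x2 x3 x4 x5 x6 x7 where x: "x = [x0,x1,x2,x3,x4,x5,x6,x7]" using len8[OF assms] by blast
  consider "m = 0" | "m = 1" | "m = 2" | "m \<noteq> 0 \<and> m \<noteq> 1 \<and> m \<noteq> 2" by blast
  then show ?thesis unfolding x by cases (simp_all add: pa_def add_ac mult_ac)
qed
lemma r2_root: "x \<in> e8_roots \<Longrightarrow> r2 m x \<in> e8_roots"
  using root_transfer[of x "r2 m x"] r2_props[of x m] root_len[of x] by simp
lemma r3_props: assumes "length x = 8"
  shows "set (r3 m x) \<subseteq> set x \<union> uminus ` set x \<and> sum_list (map nz (r3 m x)) = sum_list (map nz x) \<and> prod_list (r3 m x) = prod_list x"
proof -
  obtain x0 x1 x2 x3 x4 x5 x6 x7 where x: "x = [x0,x1,x2,x3,x4,x5,x6,x7]" using len8[OF assms] by blast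
  consider "m = 0" | "m = 1" | "m = 2" | "m \<noteq> 0 \<and> m \<noteq> 1 \<and> m \<noteq> 2" by blast
  then show ?thesis unfolding x by cases (simp_all add: pa_def add_ac mult_ac)
qed
lemma r3_root: "x \<in> e8_roots \<Longrightarrow> r3 m x \<in> e8_roots"
  using root_transfer[of x "r3 m x"] r3_props[of x m] root_len[of x] by simp
lemma BB_root: "x \<in> e8_roots \<Longrightarrow> BB M x \<in> e8_roots"
  by (simp add: BB_def r1_root r2_root r3_root split: prod.split)

lemma root_ip: assumes "x \<in> e8_roots" shows "ip x x \<noteq> 0"
proof
  assume h: "ip x x = 0"
  obtain x0 x1 x2 x3 x4 x5 x6 x7 where x: "x = [x0,x1,x2,x3,x4,x5,x6,x7]" using len8[OF root_len[OF assms]] by blast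
  have s: "x0*x0+x1*x1+x2*x2+x3*x3+x4*x4+x5*x5+x6*x6+x7*x7 = 0" using h unfolding x ip8 .
  have "x0*x0 = 0 \<and> x1*x1 = 0 \<and> x2*x2 = 0 \<and> x3*x3 = 0 \<and> x4*x4 = 0 \<and> x5*x5 = 0 \<and> x6*x6 = 0 \<and> x7*x7 = 0"
    using s zero_le_square[of x0] zero_le_square[of x1] zero_le_square[of x2] zero_le_square[of x3]
      zero_le_square[of x4] zero_le_square[of x5] zero_le_square[of x6] zero_le_square[of x7] by linarith
  then have "x = [0,0,0,0,0,0,0,0]" unfolding x by simp
  then show False using assms by (simp add: e8_roots_def)
qed
lemma act_BB: assumes "M \<in> Lset" "length x = 8" shows "act M x = BB M x"
proof -
  obtain x0 x1 x2 x3 x4 x5 x6 x7 where x: "x = [x0,x1,x2,x3,x4,x5,x6,x7]" using len8[OF assms(2)] by blast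
  obtain m1 m2 m3 where M: "M = (m1,m2,m3)" and h: "m1 \<in> {0,1,2,3}" "m2 \<in> {0,1,2,3}" "m3 \<in> {0,1,2,3}"
    using assms(1) unfolding Lset_iff by blast
  show ?thesis unfolding x M act_expand list.map using h
    apply (simp only: insert_iff empty_iff simp_thms)
    apply (elim disjE)
    by (simp_all add: sum8 kron3_def pauli_def BB_def pa_def)
qed



lemma vmap_vert: assumes "M \<in> Lset" "length x = 8" shows "vmap M (vert x) = vert (BB M x)"
  using assms by (simp add: vmap_def vert_neg act_neg act_BB BB_neg)

lemma vert_root: "x \<in> e8_roots \<Longrightarrow> vert x \<in> e8_vertices" by (simp add: e8_vertices_def)

lemma adj_iff: assumes "u \<in> e8_roots" "v \<in> e8_roots"
  shows "e8_adj (vert u) (vert v) \<longleftrightarrow> ip u v = 0"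
proof -
  have "vert u \<in> e8_vertices" "vert v \<in> e8_vertices" by (simp_all add: vert_root assms)
  then show ?thesis unfolding e8_adj_def using root_len[OF assms(1)] root_len[OF assms(2)]
    by (auto simp: vert_neg ip_neg1 ip_neg2)
qed

lemma walk1: "e8_walk (Suc 0) p q \<longleftrightarrow> e8_adj p q" by simp
lemma walk2: "e8_walk (Suc (Suc 0)) p q \<longleftrightarrow> (\<exists>r. e8_adj p r \<and> e8_adj r q)" by simp

lemma adj_vert: "e8_adj p q \<Longrightarrow> \<exists>x\<in>e8_roots. q = vert x"
  by (auto simp: e8_adj_def e8_vertices_def)

lemma dist_lemma:
  assumes CN: "\<And>u v. u \<in> e8_roots \<Longrightarrow> v \<in> e8_roots \<Longrightarrow> ip u v \<noteq> 0 \<Longrightarrow> \<not> pm v u \<Longrightarrow> \<exists>z\<in>e8_roots. ip u z = 0 \<and> ip z v = 0"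
    and u: "u \<in> e8_roots" and v: "v \<in> e8_roots" and ne: "vert u \<noteq> vert v"
  shows "e8_dist (vert u) (vert v) = (if ip u v = 0 then 1 else 2)"
proof (cases "ip u v = 0")
  case True
  have "(LEAST n. e8_walk n (vert u) (vert v)) = 1"
  proof (rule Least_equality)
    show "e8_walk 1 (vert u) (vert v)" using True adj_iff[OF u v] by (simp add: walk1)
    show "1 \<le> n" if "e8_walk n (vert u) (vert v)" for n
      using that ne by (cases n) auto
  qed
  then show ?thesis using True by (simp add: e8_dist_def)
next
  case False
  have npm: "\<not> pm v u" using ne pm_vert pm_sym by metis
  obtain z where z: "z \<in> e8_roots" "ip u z = 0" "ip z v = 0" using CN[OF u v False npm] by blast
  have "(LEAST n. e8_walk n (vert u) (vert v)) = 2"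
  proof (rule Least_equality)
    show "e8_walk 2 (vert u) (vert v)" unfolding numeral_2_eq_2 walk2
      using z adj_iff[OF u z(1)] adj_iff[OF z(1) v] by blast
    show "2 \<le> n" if "e8_walk n (vert u) (vert v)" for n
    proof (rule ccontr)
      assume "\<not> 2 \<le> n"
      then have "n = 0 \<or> n = Suc 0" by arith
      then show False using that ne False adj_iff[OF u v] by auto
    qed
  qed
  then show ?thesis using False by (simp add: e8_dist_def)
qed

lemma ex_nz: assumes "length a = 8" "ip a a \<noteq> 0" shows "\<exists>i<8. a ! i \<noteq> 0"
proof (rule ccontr)
  assume "\<not> (\<exists>i<8. a ! i \<noteq> 0)"
  then have "ip a a = 0" by (simp add: ip_def)
  then show False using assms by simp
qed

lemma proj_entry: assumes "i < 8" "j < 8"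
  shows "(proj a * proj b) $$ (i,j) = (1 / of_int (ip a a)) * (1 / of_int (ip b b)) * of_int (a!i) * of_int (b!j) * of_int (ip a b)"
proof -
  have "(proj a * proj b) $$ (i,j) = (\<Sum>k\<in>{0..<8}. ((1 / of_int (ip a a)) * of_int (a!i * a!k)) * ((1 / of_int (ip b b)) * of_int (b!k * b!j)))"
    using assms by (simp add: proj_def scalar_prod_def)
  also have "\<dots> = (\<Sum>k\<in>{0..<8}. ((1 / of_int (ip a a)) * (1 / of_int (ip b b)) * of_int (a!i) * of_int (b!j)) * of_int (a!k * b!k))"
    by (rule sum.cong) (simp_all add: algebra_simps)
  also have "\<dots> = ((1 / of_int (ip a a)) * (1 / of_int (ip b b)) * of_int (a!i) * of_int (b!j)) * (\<Sum>k\<in>{0..<8}. of_int (a!k * b!k))"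
    by (rule sum_distrib_left[symmetric])
  also have "(\<Sum>k\<in>{0..<8}. of_int (a!k * b!k)) = (of_int (ip a b) :: complex)"
    by (simp only: ip_def atLeast0LessThan of_int_sum)
  finally show ?thesis .
qed

lemma proj_lemma: assumes "length a = 8" "length b = 8" "ip a a \<noteq> 0" "ip b b \<noteq> 0"
  shows "proj a * proj b = 0\<^sub>m 8 8 \<longleftrightarrow> ip a b = 0"
proof
  assume h: "proj a * proj b = 0\<^sub>m 8 8"
  obtain i where i: "i < 8" "a ! i \<noteq> 0" using ex_nz[OF assms(1,3)] by blast
  obtain j where j: "j < 8" "b ! j \<noteq> 0" using ex_nz[OF assms(2,4)] by blast
  have "(proj a * proj b) $$ (i,j) = 0" using h i j by simp
  then show "ip a b = 0" using proj_entry[OF i(1) j(1), of a b] assms(3,4) i(2) j(2) by simp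
next
  assume h: "ip a b = 0"
  show "proj a * proj b = 0\<^sub>m 8 8"
  proof (rule eq_matI)
    show "dim_row (proj a * proj b) = dim_row (0\<^sub>m 8 8)" by (simp add: proj_def)
    show "dim_col (proj a * proj b) = dim_col (0\<^sub>m 8 8)" by (simp add: proj_def)
    fix i j assume "i < dim_row (0\<^sub>m 8 8 :: complex mat)" "j < dim_col (0\<^sub>m 8 8 :: complex mat)"
    then show "(proj a * proj b) $$ (i,j) = 0\<^sub>m 8 8 $$ (i,j)" by (simp add: proj_entry h)
  qed
qed




definition L16 :: "(nat \<times> nat) list" where
  "L16 = [(0,0),(0,1),(0,2),(0,3),(1,0),(1,1),(1,2),(1,3),(2,0),(2,1),(2,2),(2,3),(3,0),(3,1),(3,2),(3,3)]"

fun chk3 :: "bool \<Rightarrow> nat \<times> nat \<times> nat \<Rightarrow> nat \<Rightarrow> nat \<Rightarrow> int list \<Rightarrow> (nat \<times> int list) list \<Rightarrow> bool" where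
  "chk3 c0 K p2 p3 w [] = True"
| "chk3 c0 K p2 p3 w ((p1,v)#rest) = (((ipL v w = 0) = (c0 \<noteq> lam K (p1,p2,p3))) \<and> chk3 c0 K p2 p3 w rest)"

fun chk2 :: "int list \<Rightarrow> bool \<Rightarrow> nat \<times> nat \<times> nat \<Rightarrow> (nat \<times> int list) list \<Rightarrow> (nat \<times> nat) list \<Rightarrow> bool" where
  "chk2 r' c0 K LV [] = True"
| "chk2 r' c0 K LV ((p2,p3)#ps) = (chk3 c0 K p2 p3 (r2 p2 (r3 p3 r')) LV \<and> chk2 r' c0 K LV ps)"

definition chk :: "int list \<Rightarrow> int list \<Rightarrow> bool \<Rightarrow> nat \<times> nat \<times> nat \<Rightarrow> bool" where
  "chk r r' c0 K = chk2 r' c0 K [(0, r1 0 r), (1, r1 1 r), (2, r1 2 r), (3, r1 3 r)] L16"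

definition cnok :: "int list \<Rightarrow> int list list \<Rightarrow> int list \<Rightarrow> int list option \<Rightarrow> bool" where
  "cnok r Z v zo = (case zo of None \<Rightarrow> ipL r v = 0 \<or> v = r \<or> v = neg r | Some z \<Rightarrow> z \<in> set Z \<and> ipL z v = 0)"

fun en1 :: "nat \<Rightarrow> nat \<Rightarrow> int list list" where
  "en1 0 0 = [[]]" | "en1 0 (Suc k) = []"
| "en1 (Suc n) 0 = map (Cons 0) (en1 n 0)"
| "en1 (Suc n) (Suc k) = map (Cons 0) (en1 n (Suc k)) @ map (Cons 1) (en1 n k) @ map (Cons (-1)) (en1 n k)"
fun en1p :: "nat \<Rightarrow> nat \<Rightarrow> int list list" where
  "en1p 0 k = []" | "en1p (Suc n) 0 = []"
| "en1p (Suc n) (Suc k) = map (Cons 0) (en1p n (Suc k)) @ map (Cons 1) (en1 n k)"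
fun en2 :: "nat \<Rightarrow> int list list" where
  "en2 0 = [[]]" | "en2 (Suc n) = map (Cons 1) (en2 n) @ map (Cons (-1)) (en2 n)"

definition Rl :: "int list list" where "Rl = [[0,0,0,0,0,0,1,1], [0,0,0,0,0,1,0,1], [0,0,0,0,0,1,1,0], [0,0,0,1,0,0,0,1], [0,0,0,1,0,0,1,0], [0,0,0,1,0,1,0,0], [0,0,0,1,1,0,0,0], [1,1,1,1,1,1,1,1], [1,1,1,1,1,1,-1,-1], [1,1,1,1,1,-1,1,-1], [1,1,1,1,1,-1,-1,1], [1,1,1,-1,1,1,1,-1], [1,1,1,-1,1,1,-1,1], [1,1,1,-1,1,-1,1,1], [1,1,1,-1,1,-1,-1,-1]]"

definition RLh :: "int list list" where "RLh = [[0,0,0,0,0,0,1,1], [0,0,0,0,0,0,1,-1], [0,0,0,0,0,1,0,1], [0,0,0,0,0,1,0,-1], [0,0,0,0,0,1,1,0], [0,0,0,0,0,1,-1,0], [0,0,0,0,1,0,0,1], [0,0,0,0,1,0,0,-1], [0,0,0,0,1,0,1,0], [0,0,0,0,1,0,-1,0], [0,0,0,0,1,1,0,0], [0,0,0,0,1,-1,0,0], [0,0,0,1,0,0,0,1], [0,0,0,1,0,0,0,-1], [0,0,0,1,0,0,1,0], [0,0,0,1,0,0,-1,0], [0,0,0,1,0,1,0,0], [0,0,0,1,0,-1,0,0], [0,0,0,1,1,0,0,0], [0,0,0,1,-1,0,0,0], [0,0,1,0,0,0,0,1], [0,0,1,0,0,0,0,-1], [0,0,1,0,0,0,1,0], [0,0,1,0,0,0,-1,0],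 [0,0,1,0,0,1,0,0], [0,0,1,0,0,-1,0,0], [0,0,1,0,1,0,0,0], [0,0,1,0,-1,0,0,0], [0,0,1,1,0,0,0,0], [0,0,1,-1,0,0,0,0], [0,1,0,0,0,0,0,1], [0,1,0,0,0,0,0,-1], [0,1,0,0,0,0,1,0], [0,1,0,0,0,0,-1,0], [0,1,0,0,0,1,0,0], [0,1,0,0,0,-1,0,0], [0,1,0,0,1,0,0,0], [0,1,0,0,-1,0,0,0], [0,1,0,1,0,0,0,0], [0,1,0,-1,0,0,0,0], [0,1,1,0,0,0,0,0], [0,1,-1,0,0,0,0,0], [1,0,0,0,0,0,0,1], [1,0,0,0,0,0,0,-1], [1,0,0,0,0,0,1,0], [1,0,0,0,0,0,-1,0], [1,0,0,0,0,1,0,0], [1,0,0,0,0,-1,0,0], [1,0,0,0,1,0,0,0], [1,0,0,0,-1,0,0,0], [1,0,0,1,0,0,0,0], [1,0,0,-1,0,0,0,0], [1,0,1,0,0,0,0,0], [1,0,-1,0,0,0,0,0], [1,1,0,0,0,0,0,0], [1,-1,0,0,0,0,0,0], [1,1,1,1,1,1,1,1], [1,1,1,1,1,1,-1,-1], [1,1,1,1,1,-1,1,-1], [1,1,1,1,1,-1,-1,1], [1,1,1,1,-1,1,1,-1], [1,1,1,1,-1,1,-1,1], [1,1,1,1,-1,-1,1,1], [1,1,1,1,-1,-1,-1,-1], [1,1,1,-1,1,1,1,-1], [1,1,1,-1,1,1,-1,1], [1,1,1,-1,1,-1,1,1], [1,1,1,-1,1,-1,-1,-1], [1,1,1,-1,-1,1,1,1],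 [1,1,1,-1,-1,1,-1,-1], [1,1,1,-1,-1,-1,1,-1], [1,1,1,-1,-1,-1,-1,1], [1,1,-1,1,1,1,1,-1], [1,1,-1,1,1,1,-1,1], [1,1,-1,1,1,-1,1,1], [1,1,-1,1,1,-1,-1,-1], [1,1,-1,1,-1,1,1,1], [1,1,-1,1,-1,1,-1,-1], [1,1,-1,1,-1,-1,1,-1], [1,1,-1,1,-1,-1,-1,1], [1,1,-1,-1,1,1,1,1], [1,1,-1,-1,1,1,-1,-1], [1,1,-1,-1,1,-1,1,-1], [1,1,-1,-1,1,-1,-1,1], [1,1,-1,-1,-1,1,1,-1], [1,1,-1,-1,-1,1,-1,1], [1,1,-1,-1,-1,-1,1,1], [1,1,-1,-1,-1,-1,-1,-1], [1,-1,1,1,1,1,1,-1], [1,-1,1,1,1,1,-1,1], [1,-1,1,1,1,-1,1,1], [1,-1,1,1,1,-1,-1,-1], [1,-1,1,1,-1,1,1,1], [1,-1,1,1,-1,1,-1,-1], [1,-1,1,1,-1,-1,1,-1], [1,-1,1,1,-1,-1,-1,1], [1,-1,1,-1,1,1,1,1], [1,-1,1,-1,1,1,-1,-1], [1,-1,1,-1,1,-1,1,-1], [1,-1,1,-1,1,-1,-1,1], [1,-1,1,-1,-1,1,1,-1], [1,-1,1,-1,-1,1,-1,1], [1,-1,1,-1,-1,-1,1,1], [1,-1,1,-1,-1,-1,-1,-1], [1,-1,-1,1,1,1,1,1], [1,-1,-1,1,1,1,-1,-1], [1,-1,-1,1,1,-1,1,-1], [1,-1,-1,1,1,-1,-1,1],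 [1,-1,-1,1,-1,1,1,-1], [1,-1,-1,1,-1,1,-1,1], [1,-1,-1,1,-1,-1,1,1], [1,-1,-1,1,-1,-1,-1,-1], [1,-1,-1,-1,1,1,1,-1], [1,-1,-1,-1,1,1,-1,1], [1,-1,-1,-1,1,-1,1,1], [1,-1,-1,-1,1,-1,-1,-1], [1,-1,-1,-1,-1,1,1,1], [1,-1,-1,-1,-1,1,-1,-1], [1,-1,-1,-1,-1,-1,1,-1], [1,-1,-1,-1,-1,-1,-1,1]]"

definition Wl :: "(nat \<times> (nat \<times> nat \<times> nat) \<times> bool) list" where "Wl = [(0,(0,0,0),False), (0,(0,0,2),True), (1,(0,0,0),False), (1,(0,2,0),True), (2,(0,0,0),False), (2,(0,0,3),True), (2,(0,0,1),False), (2,(0,0,2),True), (1,(0,0,1),False), (1,(0,2,1),True), (0,(0,1,0),False), (0,(0,1,2),True), (3,(0,0,0),False), (3,(2,0,0),True), (4,(0,0,0),False), (4,(0,0,3),True), (5,(0,0,0),False), (5,(0,3,0),True), (6,(0,0,0),False), (6,(0,0,3),True), (4,(0,0,1),False), (4,(0,0,2),True), (3,(0,0,1),False), (3,(2,0,1),True), (6,(0,0,1),False), (6,(0,0,2),True), (5,(0,0,1),False), (5,(0,3,1),True), (0,(1,0,0),False), (0,(1,0,2),True), (5,(0,1,0),False), (5,(0,2,0),True), (6,(0,1,0),False), (6,(0,1,3),True), (3,(0,1,0),False), (3,(2,1,0),True), (4,(0,1,0),False), (4,(0,1,3),True), (1,(1,0,0),False), (1,(1,2,0),True), (2,(1,0,0),False),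 (2,(1,0,3),True), (6,(0,1,1),False), (6,(0,1,2),True), (5,(0,1,1),False), (5,(0,2,1),True), (4,(0,1,1),False), (4,(0,1,2),True), (3,(0,1,1),False), (3,(2,1,1),True), (2,(1,0,1),False), (2,(1,0,2),True), (1,(1,0,1),False), (1,(1,2,1),True), (0,(1,1,0),False), (0,(1,1,2),True), (7,(0,0,0),False), (8,(0,0,0),False), (9,(0,0,0),False), (10,(0,0,0),False), (10,(0,0,1),False), (9,(0,0,1),False), (8,(0,1,0),False), (7,(2,0,0),True), (11,(0,0,0),False), (12,(0,0,0),False), (13,(0,0,0),False), (14,(0,0,0),False), (14,(0,1,3),False), (13,(0,2,2),True), (12,(0,1,3),False), (11,(2,0,0),True), (12,(0,0,1),False), (11,(0,0,1),False), (14,(0,1,2),False), (13,(0,2,3),True), (13,(0,0,1),False), (14,(0,0,1),False), (11,(2,0,1),True), (12,(0,1,2),False), (8,(0,3,0),False), (7,(0,2,0),True), (10,(0,2,1),True), (9,(0,2,0),True), (9,(0,2,1),True), (10,(0,2,0),True), (7,(2,2,0),False), (8,(0,2,0),True), (13,(0,0,3),False), (14,(0,0,3),False), (11,(0,0,3),False), (12,(0,0,3),False), (12,(0,1,0),False), (11,(2,0,3),True), (14,(0,1,0),False), (13,(0,2,1),False), (9,(0,0,3),False), (10,(0,0,3),False), (7,(0,0,2),True), (8,(0,0,2),True), (8,(0,1,2),True), (7,(2,0,2),False), (10,(0,0,2),True), (9,(0,0,2),True), (10,(0,2,2),False), (9,(0,2,3),True), (8,(0,3,2),True), (7,(0,2,2),False),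 (7,(2,2,2),True), (8,(0,2,2),False), (9,(0,2,2),False), (10,(0,2,3),True), (14,(0,1,1),True), (13,(0,2,0),True), (12,(0,0,2),True), (11,(0,0,2),True), (11,(2,0,2),False), (12,(0,1,1),True), (13,(0,0,2),True), (14,(0,0,2),True)]"

definition Zl :: "int list list list" where "Zl = [[[1,1,0,0,0,0,0,0], [1,-1,0,0,0,0,0,0], [0,0,1,1,0,0,0,0]], [[1,1,0,0,0,0,0,0], [1,-1,0,0,0,0,0,0], [0,0,1,1,0,0,0,0]], [[1,1,0,0,0,0,0,0], [1,-1,0,0,0,0,0,0], [0,0,1,1,0,0,0,0]], [[1,1,0,0,0,0,0,0], [1,-1,0,0,0,0,0,0], [0,0,1,0,1,0,0,0]], [[1,1,0,0,0,0,0,0], [1,-1,0,0,0,0,0,0], [0,0,1,0,1,0,0,0]], [[1,1,0,0,0,0,0,0], [1,-1,0,0,0,0,0,0], [0,0,1,0,1,0,0,0]], [[1,1,0,0,0,0,0,0], [1,-1,0,0,0,0,0,0], [0,0,1,0,0,1,0,0]], [[1,-1,0,0,0,0,0,0], [0,0,1,-1,0,0,0,0], [0,0,0,0,1,-1,0,0]], [[1,-1,0,0,0,0,0,0], [0,0,1,-1,0,0,0,0], [0,0,0,0,1,-1,0,0]], [[1,-1,0,0,0,0,0,0], [0,0,1,-1,0,0,0,0], [0,0,0,0,1,1,0,0]], [[1,-1,0,0,0,0,0,0], [0,0,1,-1,0,0,0,0], [0,0,0,0,1,1,0,0]], [[1,-1,0,0,0,0,0,0], [0,0,1,1,0,0,0,0],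 [0,0,0,0,1,-1,0,0]], [[1,-1,0,0,0,0,0,0], [0,0,1,1,0,0,0,0], [0,0,0,0,1,-1,0,0]], [[1,-1,0,0,0,0,0,0], [0,0,1,1,0,0,0,0], [0,0,0,0,1,1,0,0]], [[1,-1,0,0,0,0,0,0], [0,0,1,1,0,0,0,0], [0,0,0,0,1,1,0,0]]]"

definition ROW0 :: "(bool \<times> (nat \<times> nat \<times> nat)) list" where "ROW0 = [(False,(3,0,0)), (False,(3,0,0)), (False,(0,3,0)), (False,(0,3,0)), (True,(3,3,0)), (True,(3,3,0)), (False,(0,0,1)), (False,(0,0,1)), (True,(3,0,1)), (True,(3,0,1)), (True,(0,3,1)), (True,(0,3,1)), (False,(3,3,1)), (False,(3,3,1))]"

definition ROW1 :: "(bool \<times> (nat \<times> nat \<times> nat)) list" where "ROW1 = [(False,(3,0,0)), (False,(0,0,3)), (True,(3,0,3)), (False,(0,0,3)), (True,(3,0,3)), (False,(0,1,0)), (True,(3,1,0)), (False,(0,1,0)), (True,(3,1,0)), (True,(0,1,3)), (False,(3,1,3)), (True,(0,1,3)), (False,(3,1,3))]"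

definition ROW2 :: "(bool \<times> (nat \<times> nat \<times> nat)) list" where "ROW2 = [(True,(0,3,3)), (False,(3,3,3)), (False,(3,3,3)), (True,(0,3,3)), (False,(0,1,1)), (True,(3,1,1)), (True,(3,1,1)), (False,(0,1,1)), (False,(0,2,2)), (True,(3,2,2)), (True,(3,2,2)), (False,(0,2,2))]"

definition ROW3 :: "(bool \<times> (nat \<times> nat \<times> nat)) list" where "ROW3 = [(False,(0,3,0)), (False,(0,0,3)), (False,(0,3,3)), (False,(1,0,0)), (True,(1,3,0)), (True,(1,0,3)), (False,(1,3,3)), (False,(1,0,0)), (True,(1,3,0)), (True,(1,0,3)), (False,(1,3,3))]"

definition ROW4 :: "(bool \<times> (nat \<times> nat \<times> nat)) list" where "ROW4 = [(False,(3,3,3)), (False,(3,0,3)), (False,(1,0,1)), (True,(1,3,1)), (False,(2,0,2)), (True,(2,3,2)), (True,(1,3,1)), (False,(1,0,1)), (True,(2,3,2)), (False,(2,0,2))]"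

definition ROW5 :: "(bool \<times> (nat \<times> nat \<times> nat)) list" where "ROW5 = [(False,(3,3,0)), (False,(1,1,0)), (False,(2,2,0)), (True,(1,1,3)), (True,(2,2,3)), (True,(1,1,3)), (True,(2,2,3)), (False,(1,1,0)), (False,(2,2,0))]"

definition ROW6 :: "(bool \<times> (nat \<times> nat \<times> nat)) list" where "ROW6 = [(False,(1,1,1)), (False,(2,2,1)), (False,(2,1,2)), (False,(1,2,2)), (True,(1,2,2)), (True,(2,1,2)), (True,(2,2,1)), (True,(1,1,1))]"

definition ROW7 :: "(bool \<times> (nat \<times> nat \<times> nat)) list" where "ROW7 = [(False,(0,0,1)), (False,(0,1,0)), (False,(0,1,1)), (False,(1,0,0)), (False,(1,0,1)), (False,(1,1,0)), (True,(1,1,1))]"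

definition ROW8 :: "(bool \<times> (nat \<times> nat \<times> nat)) list" where "ROW8 = [(False,(3,1,1)), (False,(3,1,0)), (False,(1,3,1)), (False,(1,3,0)), (True,(2,2,1)), (False,(2,2,0))]"

definition ROW9 :: "(bool \<times> (nat \<times> nat \<times> nat)) list" where "ROW9 = [(False,(3,0,1)), (False,(1,1,3)), (True,(2,1,2)), (False,(1,0,3)), (False,(2,0,2))]"

definition ROW10 :: "(bool \<times> (nat \<times> nat \<times> nat)) list" where "ROW10 = [(True,(1,2,2)), (False,(2,2,3)), (False,(2,3,2)), (False,(1,3,3))]"

definition ROW11 :: "(bool \<times> (nat \<times> nat \<times> nat)) list" where "ROW11 = [(False,(0,3,1)), (False,(0,1,3)), (False,(0,2,2))]"

definition ROW12 :: "(bool \<times> (nat \<times> nat \<times> nat)) list" where "ROW12 = [(False,(3,2,2)), (False,(3,1,3))]"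

definition ROW13 :: "(bool \<times> (nat \<times> nat \<times> nat)) list" where "ROW13 = [(False,(3,3,1))]"

definition ROW14 :: "(bool \<times> (nat \<times> nat \<times> nat)) list" where "ROW14 = []"

definition ROWS :: "(bool \<times> (nat \<times> nat \<times> nat)) list list" where "ROWS = [ROW0, ROW1, ROW2, ROW3, ROW4, ROW5, ROW6, ROW7, ROW8, ROW9, ROW10, ROW11, ROW12, ROW13, ROW14]"

definition CN0 :: "int list option list" where "CN0 = [None, None, Some [1,1,0,0,0,0,0,0], Some [1,1,0,0,0,0,0,0], Some [1,1,0,0,0,0,0,0], Some [1,1,0,0,0,0,0,0], Some [1,1,0,0,0,0,0,0], Some [1,1,0,0,0,0,0,0], Some [1,1,0,0,0,0,0,0], Some [1,1,0,0,0,0,0,0], None, None, Some [1,1,0,0,0,0,0,0], Some [1,1,0,0,0,0,0,0], Some [1,1,0,0,0,0,0,0], Some [1,1,0,0,0,0,0,0], None, None, None, None, Some [1,1,0,0,0,0,0,0], Some [1,1,0,0,0,0,0,0], Some [1,1,0,0,0,0,0,0], Some [1,1,0,0,0,0,0,0], None, None, None, None, None, None, Some [0,0,1,1,0,0,0,0], Some [0,0,1,1,0,0,0,0], Some [0,0,1,1,0,0,0,0], Some [0,0,1,1,0,0,0,0], None, None, None, None, None, None, None, None, Some [0,0,1,1,0,0,0,0], Some [0,0,1,1,0,0,0,0], Some [0,0,1,1,0,0,0,0], Some [0,0,1,1,0,0,0,0], None, None, None, None, None, None, None, None, None, None, Some [1,-1,0,0,0,0,0,0], Some [1,-1,0,0,0,0,0,0],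 None, None, None, None, Some [1,-1,0,0,0,0,0,0], Some [1,-1,0,0,0,0,0,0], None, None, Some [1,-1,0,0,0,0,0,0], Some [1,-1,0,0,0,0,0,0], Some [1,-1,0,0,0,0,0,0], Some [1,-1,0,0,0,0,0,0], None, None, None, None, Some [1,-1,0,0,0,0,0,0], Some [1,-1,0,0,0,0,0,0], Some [1,-1,0,0,0,0,0,0], Some [1,-1,0,0,0,0,0,0], None, None, Some [1,-1,0,0,0,0,0,0], Some [1,-1,0,0,0,0,0,0], None, None, None, None, Some [1,-1,0,0,0,0,0,0], Some [1,-1,0,0,0,0,0,0], None, None, Some [1,1,0,0,0,0,0,0], Some [1,1,0,0,0,0,0,0], Some [1,1,0,0,0,0,0,0], Some [1,1,0,0,0,0,0,0], None, None, Some [1,1,0,0,0,0,0,0], Some [1,1,0,0,0,0,0,0], None, None, None, None, Some [1,1,0,0,0,0,0,0], Some [1,1,0,0,0,0,0,0], Some [1,1,0,0,0,0,0,0], Some [1,1,0,0,0,0,0,0], None, None, None, None, Some [1,1,0,0,0,0,0,0], Some [1,1,0,0,0,0,0,0], None, None, Some [1,1,0,0,0,0,0,0], Some [1,1,0,0,0,0,0,0], Some [1,1,0,0,0,0,0,0], Some [1,1,0,0,0,0,0,0], None, None]"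

definition CN1 :: "int list option list" where "CN1 = [Some [1,1,0,0,0,0,0,0], Some [1,1,0,0,0,0,0,0], None, None, Some [1,1,0,0,0,0,0,0], Some [1,1,0,0,0,0,0,0], Some [1,1,0,0,0,0,0,0], Some [1,1,0,0,0,0,0,0], None, None, Some [1,1,0,0,0,0,0,0], Some [1,1,0,0,0,0,0,0], Some [1,1,0,0,0,0,0,0], Some [1,1,0,0,0,0,0,0], None, None, Some [1,1,0,0,0,0,0,0], Some [1,1,0,0,0,0,0,0], None, None, Some [1,1,0,0,0,0,0,0], Some [1,1,0,0,0,0,0,0], None, None, Some [1,1,0,0,0,0,0,0], Some [1,1,0,0,0,0,0,0], None, None, None, None, Some [0,0,1,1,0,0,0,0], Some [0,0,1,1,0,0,0,0], None, None, Some [0,0,1,1,0,0,0,0], Some [0,0,1,1,0,0,0,0], None, None, None, None, None, None, Some [0,0,1,1,0,0,0,0], Some [0,0,1,1,0,0,0,0], None, None, Some [0,0,1,1,0,0,0,0], Some [0,0,1,1,0,0,0,0], None, None, None, None, None, None, None, None, Some [1,-1,0,0,0,0,0,0], None, Some [1,-1,0,0,0,0,0,0], None, None, Some [1,-1,0,0,0,0,0,0], None, Some [1,-1,0,0,0,0,0,0], None, Some [1,-1,0,0,0,0,0,0], None, Some [1,-1,0,0,0,0,0,0], Some [1,-1,0,0,0,0,0,0], None, Some [1,-1,0,0,0,0,0,0], None, None, Some [1,-1,0,0,0,0,0,0], None, Some [1,-1,0,0,0,0,0,0], Some [1,-1,0,0,0,0,0,0], None, Some [1,-1,0,0,0,0,0,0],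 None, Some [1,-1,0,0,0,0,0,0], None, Some [1,-1,0,0,0,0,0,0], None, None, Some [1,-1,0,0,0,0,0,0], None, Some [1,-1,0,0,0,0,0,0], None, Some [1,1,0,0,0,0,0,0], None, Some [1,1,0,0,0,0,0,0], Some [1,1,0,0,0,0,0,0], None, Some [1,1,0,0,0,0,0,0], None, Some [1,1,0,0,0,0,0,0], None, Some [1,1,0,0,0,0,0,0], None, None, Some [1,1,0,0,0,0,0,0], None, Some [1,1,0,0,0,0,0,0], Some [1,1,0,0,0,0,0,0], None, Some [1,1,0,0,0,0,0,0], None, None, Some [1,1,0,0,0,0,0,0], None, Some [1,1,0,0,0,0,0,0], None, Some [1,1,0,0,0,0,0,0], None, Some [1,1,0,0,0,0,0,0], Some [1,1,0,0,0,0,0,0], None, Some [1,1,0,0,0,0,0,0], None]"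

definition CN2 :: "int list option list" where "CN2 = [Some [1,1,0,0,0,0,0,0], Some [1,1,0,0,0,0,0,0], Some [1,1,0,0,0,0,0,0], Some [1,1,0,0,0,0,0,0], None, None, None, None, Some [1,1,0,0,0,0,0,0], Some [1,1,0,0,0,0,0,0], Some [1,1,0,0,0,0,0,0], Some [1,1,0,0,0,0,0,0], None, None, Some [1,1,0,0,0,0,0,0], Some [1,1,0,0,0,0,0,0], Some [1,1,0,0,0,0,0,0], Some [1,1,0,0,0,0,0,0], None, None, None, None, Some [1,1,0,0,0,0,0,0], Some [1,1,0,0,0,0,0,0], Some [1,1,0,0,0,0,0,0], Some [1,1,0,0,0,0,0,0], None, None, None, None, None, None, Some [0,0,1,1,0,0,0,0], Some [0,0,1,1,0,0,0,0], Some [0,0,1,1,0,0,0,0], Some [0,0,1,1,0,0,0,0], None, None, None, None, None, None, None, None, Some [0,0,1,1,0,0,0,0], Some [0,0,1,1,0,0,0,0], Some [0,0,1,1,0,0,0,0], Some [0,0,1,1,0,0,0,0], None, None, None, None, None, None, None, None, Some [1,-1,0,0,0,0,0,0], None, None, Some [1,-1,0,0,0,0,0,0], Some [1,-1,0,0,0,0,0,0], None, None, Some [1,-1,0,0,0,0,0,0], Some [1,-1,0,0,0,0,0,0], None, None, Some [1,-1,0,0,0,0,0,0], Some [1,-1,0,0,0,0,0,0], None, None, Some [1,-1,0,0,0,0,0,0], Some [1,-1,0,0,0,0,0,0], None, None, Some [1,-1,0,0,0,0,0,0], Some [1,-1,0,0,0,0,0,0], None, None, Some [1,-1,0,0,0,0,0,0],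 Some [1,-1,0,0,0,0,0,0], None, None, Some [1,-1,0,0,0,0,0,0], Some [1,-1,0,0,0,0,0,0], None, None, Some [1,-1,0,0,0,0,0,0], Some [1,1,0,0,0,0,0,0], None, None, Some [1,1,0,0,0,0,0,0], Some [1,1,0,0,0,0,0,0], None, None, Some [1,1,0,0,0,0,0,0], Some [1,1,0,0,0,0,0,0], None, None, Some [1,1,0,0,0,0,0,0], Some [1,1,0,0,0,0,0,0], None, None, Some [1,1,0,0,0,0,0,0], Some [1,1,0,0,0,0,0,0], None, None, Some [1,1,0,0,0,0,0,0], Some [1,1,0,0,0,0,0,0], None, None, Some [1,1,0,0,0,0,0,0], Some [1,1,0,0,0,0,0,0], None, None, Some [1,1,0,0,0,0,0,0], Some [1,1,0,0,0,0,0,0], None, None, Some [1,1,0,0,0,0,0,0]]"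

definition CN3 :: "int list option list" where "CN3 = [Some [1,1,0,0,0,0,0,0], Some [1,1,0,0,0,0,0,0], Some [1,1,0,0,0,0,0,0], Some [1,1,0,0,0,0,0,0], None, None, Some [1,1,0,0,0,0,0,0], Some [1,1,0,0,0,0,0,0], None, None, None, None, None, None, Some [1,1,0,0,0,0,0,0], Some [1,1,0,0,0,0,0,0], Some [1,1,0,0,0,0,0,0], Some [1,1,0,0,0,0,0,0], Some [1,1,0,0,0,0,0,0], Some [1,1,0,0,0,0,0,0], Some [1,1,0,0,0,0,0,0], Some [1,1,0,0,0,0,0,0], None, None, None, None, None, None, Some [1,1,0,0,0,0,0,0], Some [1,1,0,0,0,0,0,0], Some [0,0,1,0,1,0,0,0], Some [0,0,1,0,1,0,0,0], None, None, None, None, None, None, Some [0,0,1,0,1,0,0,0], Some [0,0,1,0,1,0,0,0], None, None, Some [0,0,1,0,1,0,0,0], Some [0,0,1,0,1,0,0,0], None, None, None, None, None, None, Some [0,0,1,0,1,0,0,0], Some [0,0,1,0,1,0,0,0], None, None, None, None, Some [1,-1,0,0,0,0,0,0], None, None, Some [1,-1,0,0,0,0,0,0], None, Some [1,-1,0,0,0,0,0,0], Some [1,-1,0,0,0,0,0,0], None, Some [1,-1,0,0,0,0,0,0], None, None, Some [1,-1,0,0,0,0,0,0], None, Some [1,-1,0,0,0,0,0,0], Some [1,-1,0,0,0,0,0,0], None, None, Some [1,-1,0,0,0,0,0,0], Some [1,-1,0,0,0,0,0,0], None, Some [1,-1,0,0,0,0,0,0], None, None, Some [1,-1,0,0,0,0,0,0],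 None, Some [1,-1,0,0,0,0,0,0], Some [1,-1,0,0,0,0,0,0], None, Some [1,-1,0,0,0,0,0,0], None, None, Some [1,-1,0,0,0,0,0,0], None, Some [1,1,0,0,0,0,0,0], Some [1,1,0,0,0,0,0,0], None, Some [1,1,0,0,0,0,0,0], None, None, Some [1,1,0,0,0,0,0,0], None, Some [1,1,0,0,0,0,0,0], Some [1,1,0,0,0,0,0,0], None, Some [1,1,0,0,0,0,0,0], None, None, Some [1,1,0,0,0,0,0,0], Some [1,1,0,0,0,0,0,0], None, None, Some [1,1,0,0,0,0,0,0], None, Some [1,1,0,0,0,0,0,0], Some [1,1,0,0,0,0,0,0], None, Some [1,1,0,0,0,0,0,0], None, None, Some [1,1,0,0,0,0,0,0], None, Some [1,1,0,0,0,0,0,0], Some [1,1,0,0,0,0,0,0], None]"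

definition CN4 :: "int list option list" where "CN4 = [Some [1,1,0,0,0,0,0,0], Some [1,1,0,0,0,0,0,0], None, None, Some [1,1,0,0,0,0,0,0], Some [1,1,0,0,0,0,0,0], None, None, Some [1,1,0,0,0,0,0,0], Some [1,1,0,0,0,0,0,0], None, None, Some [1,1,0,0,0,0,0,0], Some [1,1,0,0,0,0,0,0], None, None, Some [1,1,0,0,0,0,0,0], Some [1,1,0,0,0,0,0,0], Some [1,1,0,0,0,0,0,0], Some [1,1,0,0,0,0,0,0], None, None, Some [1,1,0,0,0,0,0,0], Some [1,1,0,0,0,0,0,0], None, None, None, None, Some [1,1,0,0,0,0,0,0], Some [1,1,0,0,0,0,0,0], None, None, Some [0,0,1,0,1,0,0,0], Some [0,0,1,0,1,0,0,0], None, None, None, None, Some [0,0,1,0,1,0,0,0], Some [0,0,1,0,1,0,0,0], None, None, None, None, Some [0,0,1,0,1,0,0,0], Some [0,0,1,0,1,0,0,0], None, None, None, None, Some [0,0,1,0,1,0,0,0], Some [0,0,1,0,1,0,0,0], None, None, None, None, Some [1,-1,0,0,0,0,0,0], None, Some [1,-1,0,0,0,0,0,0], None, Some [1,-1,0,0,0,0,0,0], None, Some [1,-1,0,0,0,0,0,0], None, None, Some [1,-1,0,0,0,0,0,0], None, Some [1,-1,0,0,0,0,0,0], None, Some [1,-1,0,0,0,0,0,0], None, Some [1,-1,0,0,0,0,0,0], Some [1,-1,0,0,0,0,0,0], None, Some [1,-1,0,0,0,0,0,0], None, Some [1,-1,0,0,0,0,0,0], None, Some [1,-1,0,0,0,0,0,0],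 None, None, Some [1,-1,0,0,0,0,0,0], None, Some [1,-1,0,0,0,0,0,0], None, Some [1,-1,0,0,0,0,0,0], None, Some [1,-1,0,0,0,0,0,0], Some [1,1,0,0,0,0,0,0], None, Some [1,1,0,0,0,0,0,0], None, Some [1,1,0,0,0,0,0,0], None, Some [1,1,0,0,0,0,0,0], None, None, Some [1,1,0,0,0,0,0,0], None, Some [1,1,0,0,0,0,0,0], None, Some [1,1,0,0,0,0,0,0], None, Some [1,1,0,0,0,0,0,0], Some [1,1,0,0,0,0,0,0], None, Some [1,1,0,0,0,0,0,0], None, Some [1,1,0,0,0,0,0,0], None, Some [1,1,0,0,0,0,0,0], None, None, Some [1,1,0,0,0,0,0,0], None, Some [1,1,0,0,0,0,0,0], None, Some [1,1,0,0,0,0,0,0], None, Some [1,1,0,0,0,0,0,0]]"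

definition CN5 :: "int list option list" where "CN5 = [None, None, Some [1,1,0,0,0,0,0,0], Some [1,1,0,0,0,0,0,0], Some [1,1,0,0,0,0,0,0], Some [1,1,0,0,0,0,0,0], None, None, None, None, Some [1,1,0,0,0,0,0,0], Some [1,1,0,0,0,0,0,0], Some [1,1,0,0,0,0,0,0], Some [1,1,0,0,0,0,0,0], Some [1,1,0,0,0,0,0,0], Some [1,1,0,0,0,0,0,0], None, None, Some [1,1,0,0,0,0,0,0], Some [1,1,0,0,0,0,0,0], None, None, None, None, Some [1,1,0,0,0,0,0,0], Some [1,1,0,0,0,0,0,0], None, None, Some [1,1,0,0,0,0,0,0], Some [1,1,0,0,0,0,0,0], None, None, None, None, Some [0,0,1,0,1,0,0,0], Some [0,0,1,0,1,0,0,0], None, None, Some [0,0,1,0,1,0,0,0], Some [0,0,1,0,1,0,0,0], None, None, None, None, None, None, Some [0,0,1,0,1,0,0,0], Some [0,0,1,0,1,0,0,0], None, None, Some [0,0,1,0,1,0,0,0], Some [0,0,1,0,1,0,0,0], None, None, None, None, Some [1,-1,0,0,0,0,0,0], Some [1,-1,0,0,0,0,0,0], None, None, Some [1,-1,0,0,0,0,0,0], Some [1,-1,0,0,0,0,0,0], None, None, None, None, Some [1,-1,0,0,0,0,0,0], Some [1,-1,0,0,0,0,0,0], None, None, Some [1,-1,0,0,0,0,0,0], Some [1,-1,0,0,0,0,0,0], Some [1,-1,0,0,0,0,0,0], Some [1,-1,0,0,0,0,0,0], None, None, Some [1,-1,0,0,0,0,0,0], Some [1,-1,0,0,0,0,0,0],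 None, None, None, None, Some [1,-1,0,0,0,0,0,0], Some [1,-1,0,0,0,0,0,0], None, None, Some [1,-1,0,0,0,0,0,0], Some [1,-1,0,0,0,0,0,0], Some [1,1,0,0,0,0,0,0], Some [1,1,0,0,0,0,0,0], None, None, Some [1,1,0,0,0,0,0,0], Some [1,1,0,0,0,0,0,0], None, None, None, None, Some [1,1,0,0,0,0,0,0], Some [1,1,0,0,0,0,0,0], None, None, Some [1,1,0,0,0,0,0,0], Some [1,1,0,0,0,0,0,0], Some [1,1,0,0,0,0,0,0], Some [1,1,0,0,0,0,0,0], None, None, Some [1,1,0,0,0,0,0,0], Some [1,1,0,0,0,0,0,0], None, None, None, None, Some [1,1,0,0,0,0,0,0], Some [1,1,0,0,0,0,0,0], None, None, Some [1,1,0,0,0,0,0,0], Some [1,1,0,0,0,0,0,0]]"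

definition CN6 :: "int list option list" where "CN6 = [None, None, None, None, None, None, Some [1,1,0,0,0,0,0,0], Some [1,1,0,0,0,0,0,0], Some [1,1,0,0,0,0,0,0], Some [1,1,0,0,0,0,0,0], Some [1,1,0,0,0,0,0,0], Some [1,1,0,0,0,0,0,0], Some [1,1,0,0,0,0,0,0], Some [1,1,0,0,0,0,0,0], Some [1,1,0,0,0,0,0,0], Some [1,1,0,0,0,0,0,0], Some [1,1,0,0,0,0,0,0], Some [1,1,0,0,0,0,0,0], None, None, None, None, None, None, None, None, Some [1,1,0,0,0,0,0,0], Some [1,1,0,0,0,0,0,0], Some [1,1,0,0,0,0,0,0], Some [1,1,0,0,0,0,0,0], None, None, None, None, None, None, Some [0,0,1,0,0,1,0,0], Some [0,0,1,0,0,1,0,0], Some [0,0,1,0,0,1,0,0], Some [0,0,1,0,0,1,0,0], None, None, None, None, None, None, None, None, Some [0,0,1,0,0,1,0,0], Some [0,0,1,0,0,1,0,0], Some [0,0,1,0,0,1,0,0], Some [0,0,1,0,0,1,0,0], None, None, None, None, Some [1,-1,0,0,0,0,0,0], Some [1,-1,0,0,0,0,0,0], Some [1,-1,0,0,0,0,0,0], Some [1,-1,0,0,0,0,0,0], None, None, None, None, None, None, None, None, Some [1,-1,0,0,0,0,0,0], Some [1,-1,0,0,0,0,0,0], Some [1,-1,0,0,0,0,0,0], Some [1,-1,0,0,0,0,0,0], Some [1,-1,0,0,0,0,0,0], Some [1,-1,0,0,0,0,0,0], Some [1,-1,0,0,0,0,0,0], Some [1,-1,0,0,0,0,0,0], None,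 None, None, None, None, None, None, None, Some [1,-1,0,0,0,0,0,0], Some [1,-1,0,0,0,0,0,0], Some [1,-1,0,0,0,0,0,0], Some [1,-1,0,0,0,0,0,0], Some [1,1,0,0,0,0,0,0], Some [1,1,0,0,0,0,0,0], Some [1,1,0,0,0,0,0,0], Some [1,1,0,0,0,0,0,0], None, None, None, None, None, None, None, None, Some [1,1,0,0,0,0,0,0], Some [1,1,0,0,0,0,0,0], Some [1,1,0,0,0,0,0,0], Some [1,1,0,0,0,0,0,0], Some [1,1,0,0,0,0,0,0], Some [1,1,0,0,0,0,0,0], Some [1,1,0,0,0,0,0,0], Some [1,1,0,0,0,0,0,0], None, None, None, None, None, None, None, None, Some [1,1,0,0,0,0,0,0], Some [1,1,0,0,0,0,0,0], Some [1,1,0,0,0,0,0,0], Some [1,1,0,0,0,0,0,0]]"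

definition CN7 :: "int list option list" where "CN7 = [Some [1,-1,0,0,0,0,0,0], None, Some [1,-1,0,0,0,0,0,0], None, Some [1,-1,0,0,0,0,0,0], None, Some [1,-1,0,0,0,0,0,0], None, Some [1,-1,0,0,0,0,0,0], None, Some [1,-1,0,0,0,0,0,0], None, Some [1,-1,0,0,0,0,0,0], None, Some [1,-1,0,0,0,0,0,0], None, Some [1,-1,0,0,0,0,0,0], None, Some [1,-1,0,0,0,0,0,0], None, Some [1,-1,0,0,0,0,0,0], None, Some [1,-1,0,0,0,0,0,0], None, Some [1,-1,0,0,0,0,0,0], None, Some [1,-1,0,0,0,0,0,0], None, Some [1,-1,0,0,0,0,0,0], None, Some [0,0,1,-1,0,0,0,0], None, Some [0,0,1,-1,0,0,0,0], None, Some [0,0,1,-1,0,0,0,0], None, Some [0,0,1,-1,0,0,0,0], None, Some [0,0,0,0,1,-1,0,0], None, Some [0,0,0,0,1,-1,0,0], None, Some [0,0,1,-1,0,0,0,0], None, Some [0,0,1,-1,0,0,0,0], None, Some [0,0,1,-1,0,0,0,0], None, Some [0,0,1,-1,0,0,0,0], None, Some [0,0,0,0,1,-1,0,0], None, Some [0,0,0,0,1,-1,0,0], None, Some [1,-1,0,0,0,0,0,0], None, None, Some [1,-1,0,0,0,0,0,0], Some [1,-1,0,0,0,0,0,0], Some [1,-1,0,0,0,0,0,0], Some [1,-1,0,0,0,0,0,0], Some [1,-1,0,0,0,0,0,0], Some [1,-1,0,0,0,0,0,0], None, Some [1,-1,0,0,0,0,0,0], Some [1,-1,0,0,0,0,0,0],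 Some [1,-1,0,0,0,0,0,0], None, Some [1,-1,0,0,0,0,0,0], None, None, None, Some [1,-1,0,0,0,0,0,0], Some [1,-1,0,0,0,0,0,0], Some [1,-1,0,0,0,0,0,0], None, Some [1,-1,0,0,0,0,0,0], None, None, None, Some [1,-1,0,0,0,0,0,0], None, None, None, None, None, None, Some [1,-1,0,0,0,0,0,0], Some [0,0,1,-1,0,0,0,0], Some [0,0,1,-1,0,0,0,0], Some [0,0,1,-1,0,0,0,0], None, Some [0,0,1,-1,0,0,0,0], None, None, None, Some [0,0,0,0,1,-1,0,0], None, None, None, None, None, None, Some [0,0,0,0,1,-1,0,0], Some [0,0,0,0,1,-1,0,0], None, None, None, None, None, None, Some [0,0,0,0,1,-1,0,0], None, None, None, Some [0,0,1,-1,0,0,0,0], None, Some [0,0,1,-1,0,0,0,0], Some [0,0,1,-1,0,0,0,0], Some [0,0,1,-1,0,0,0,0]]"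

definition CN8 :: "int list option list" where "CN8 = [Some [1,-1,0,0,0,0,0,0], None, None, Some [1,-1,0,0,0,0,0,0], None, Some [1,-1,0,0,0,0,0,0], None, Some [1,-1,0,0,0,0,0,0], None, Some [1,-1,0,0,0,0,0,0], Some [1,-1,0,0,0,0,0,0], None, None, Some [1,-1,0,0,0,0,0,0], None, Some [1,-1,0,0,0,0,0,0], Some [1,-1,0,0,0,0,0,0], None, Some [1,-1,0,0,0,0,0,0], None, None, Some [1,-1,0,0,0,0,0,0], None, Some [1,-1,0,0,0,0,0,0], Some [1,-1,0,0,0,0,0,0], None, Some [1,-1,0,0,0,0,0,0], None, Some [1,-1,0,0,0,0,0,0], None, None, Some [0,0,1,-1,0,0,0,0], None, Some [0,0,1,-1,0,0,0,0], Some [0,0,1,-1,0,0,0,0], None, Some [0,0,1,-1,0,0,0,0], None, Some [0,0,0,0,1,-1,0,0], None, Some [0,0,0,0,1,-1,0,0], None, None, Some [0,0,1,-1,0,0,0,0], None, Some [0,0,1,-1,0,0,0,0], Some [0,0,1,-1,0,0,0,0], None, Some [0,0,1,-1,0,0,0,0], None, Some [0,0,0,0,1,-1,0,0], None, Some [0,0,0,0,1,-1,0,0], None, Some [1,-1,0,0,0,0,0,0], None, Some [1,-1,0,0,0,0,0,0], None, Some [1,-1,0,0,0,0,0,0], Some [1,-1,0,0,0,0,0,0], Some [1,-1,0,0,0,0,0,0], Some [1,-1,0,0,0,0,0,0], None, Some [1,-1,0,0,0,0,0,0], Some [1,-1,0,0,0,0,0,0], Some [1,-1,0,0,0,0,0,0],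 None, Some [1,-1,0,0,0,0,0,0], None, Some [1,-1,0,0,0,0,0,0], None, None, Some [1,-1,0,0,0,0,0,0], Some [1,-1,0,0,0,0,0,0], None, Some [1,-1,0,0,0,0,0,0], None, Some [1,-1,0,0,0,0,0,0], None, None, None, Some [1,-1,0,0,0,0,0,0], None, None, None, None, Some [1,-1,0,0,0,0,0,0], None, Some [0,0,1,-1,0,0,0,0], Some [0,0,1,-1,0,0,0,0], None, Some [0,0,1,-1,0,0,0,0], None, Some [0,0,1,-1,0,0,0,0], None, None, None, Some [0,0,0,0,1,-1,0,0], None, None, None, None, Some [0,0,0,0,1,-1,0,0], None, None, Some [0,0,0,0,1,-1,0,0], None, None, None, None, Some [0,0,0,0,1,-1,0,0], None, None, None, Some [0,0,1,-1,0,0,0,0], None, Some [0,0,1,-1,0,0,0,0], None, Some [0,0,1,-1,0,0,0,0], Some [0,0,1,-1,0,0,0,0]]"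

definition CN9 :: "int list option list" where "CN9 = [None, Some [1,-1,0,0,0,0,0,0], Some [1,-1,0,0,0,0,0,0], None, None, Some [1,-1,0,0,0,0,0,0], None, Some [1,-1,0,0,0,0,0,0], Some [1,-1,0,0,0,0,0,0], None, None, Some [1,-1,0,0,0,0,0,0], None, Some [1,-1,0,0,0,0,0,0], Some [1,-1,0,0,0,0,0,0], None, None, Some [1,-1,0,0,0,0,0,0], Some [1,-1,0,0,0,0,0,0], None, None, Some [1,-1,0,0,0,0,0,0], Some [1,-1,0,0,0,0,0,0], None, None, Some [1,-1,0,0,0,0,0,0], Some [1,-1,0,0,0,0,0,0], None, Some [1,-1,0,0,0,0,0,0], None, None, Some [0,0,1,-1,0,0,0,0], Some [0,0,1,-1,0,0,0,0], None, None, Some [0,0,1,-1,0,0,0,0], Some [0,0,1,-1,0,0,0,0], None, Some [0,0,0,0,1,1,0,0], None, Some [0,0,0,0,1,1,0,0], None, None, Some [0,0,1,-1,0,0,0,0], Some [0,0,1,-1,0,0,0,0], None, None, Some [0,0,1,-1,0,0,0,0], Some [0,0,1,-1,0,0,0,0], None, Some [0,0,0,0,1,1,0,0], None, Some [0,0,0,0,1,1,0,0], None, Some [1,-1,0,0,0,0,0,0], None, Some [1,-1,0,0,0,0,0,0], Some [1,-1,0,0,0,0,0,0], None, Some [1,-1,0,0,0,0,0,0], Some [1,-1,0,0,0,0,0,0], None, Some [1,-1,0,0,0,0,0,0], Some [1,-1,0,0,0,0,0,0], Some [1,-1,0,0,0,0,0,0], None, Some [1,-1,0,0,0,0,0,0],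 Some [1,-1,0,0,0,0,0,0], None, None, Some [1,-1,0,0,0,0,0,0], None, Some [1,-1,0,0,0,0,0,0], None, Some [1,-1,0,0,0,0,0,0], Some [1,-1,0,0,0,0,0,0], None, None, Some [1,-1,0,0,0,0,0,0], None, None, None, Some [1,-1,0,0,0,0,0,0], None, None, Some [1,-1,0,0,0,0,0,0], None, None, Some [0,0,1,-1,0,0,0,0], None, Some [0,0,1,-1,0,0,0,0], Some [0,0,1,-1,0,0,0,0], None, None, Some [0,0,1,-1,0,0,0,0], None, None, None, Some [0,0,0,0,1,1,0,0], None, None, Some [0,0,0,0,1,1,0,0], None, None, None, None, Some [0,0,0,0,1,1,0,0], None, None, Some [0,0,0,0,1,1,0,0], None, None, None, Some [0,0,1,-1,0,0,0,0], None, None, Some [0,0,1,-1,0,0,0,0], Some [0,0,1,-1,0,0,0,0], None, Some [0,0,1,-1,0,0,0,0]]"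

definition CN10 :: "int list option list" where "CN10 = [None, Some [1,-1,0,0,0,0,0,0], None, Some [1,-1,0,0,0,0,0,0], Some [1,-1,0,0,0,0,0,0], None, Some [1,-1,0,0,0,0,0,0], None, None, Some [1,-1,0,0,0,0,0,0], None, Some [1,-1,0,0,0,0,0,0], Some [1,-1,0,0,0,0,0,0], None, None, Some [1,-1,0,0,0,0,0,0], None, Some [1,-1,0,0,0,0,0,0], Some [1,-1,0,0,0,0,0,0], None, Some [1,-1,0,0,0,0,0,0], None, None, Some [1,-1,0,0,0,0,0,0], None, Some [1,-1,0,0,0,0,0,0], Some [1,-1,0,0,0,0,0,0], None, Some [1,-1,0,0,0,0,0,0], None, Some [0,0,1,-1,0,0,0,0], None, None, Some [0,0,1,-1,0,0,0,0], None, Some [0,0,1,-1,0,0,0,0], Some [0,0,1,-1,0,0,0,0], None, Some [0,0,0,0,1,1,0,0], None, Some [0,0,0,0,1,1,0,0], None, Some [0,0,1,-1,0,0,0,0], None, None, Some [0,0,1,-1,0,0,0,0], None, Some [0,0,1,-1,0,0,0,0], Some [0,0,1,-1,0,0,0,0], None, Some [0,0,0,0,1,1,0,0], None, Some [0,0,0,0,1,1,0,0], None, Some [1,-1,0,0,0,0,0,0], None, Some [1,-1,0,0,0,0,0,0], Some [1,-1,0,0,0,0,0,0], Some [1,-1,0,0,0,0,0,0], None, None, Some [1,-1,0,0,0,0,0,0], Some [1,-1,0,0,0,0,0,0], Some [1,-1,0,0,0,0,0,0], None, Some [1,-1,0,0,0,0,0,0], Some [1,-1,0,0,0,0,0,0],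 Some [1,-1,0,0,0,0,0,0], None, None, None, Some [1,-1,0,0,0,0,0,0], None, Some [1,-1,0,0,0,0,0,0], Some [1,-1,0,0,0,0,0,0], Some [1,-1,0,0,0,0,0,0], None, None, None, Some [1,-1,0,0,0,0,0,0], None, None, None, Some [1,-1,0,0,0,0,0,0], Some [1,-1,0,0,0,0,0,0], None, None, None, None, Some [0,0,1,-1,0,0,0,0], Some [0,0,1,-1,0,0,0,0], Some [0,0,1,-1,0,0,0,0], None, None, None, Some [0,0,1,-1,0,0,0,0], None, None, None, Some [0,0,0,0,1,1,0,0], Some [0,0,0,0,1,1,0,0], None, None, None, None, None, None, Some [0,0,0,0,1,1,0,0], Some [0,0,0,0,1,1,0,0], None, None, None, Some [0,0,1,-1,0,0,0,0], None, None, None, Some [0,0,1,-1,0,0,0,0], Some [0,0,1,-1,0,0,0,0], Some [0,0,1,-1,0,0,0,0], None]"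

definition CN11 :: "int list option list" where "CN11 = [None, Some [1,-1,0,0,0,0,0,0], None, Some [1,-1,0,0,0,0,0,0], Some [1,-1,0,0,0,0,0,0], None, None, Some [1,-1,0,0,0,0,0,0], Some [1,-1,0,0,0,0,0,0], None, Some [1,-1,0,0,0,0,0,0], None, Some [1,-1,0,0,0,0,0,0], None, None, Some [1,-1,0,0,0,0,0,0], None, Some [1,-1,0,0,0,0,0,0], None, Some [1,-1,0,0,0,0,0,0], None, Some [1,-1,0,0,0,0,0,0], Some [1,-1,0,0,0,0,0,0], None, Some [1,-1,0,0,0,0,0,0], None, Some [1,-1,0,0,0,0,0,0], None, None, Some [1,-1,0,0,0,0,0,0], None, Some [0,0,1,1,0,0,0,0], Some [0,0,1,1,0,0,0,0], None, Some [0,0,1,1,0,0,0,0], None, Some [0,0,1,1,0,0,0,0], None, None, Some [0,0,0,0,1,-1,0,0], Some [0,0,0,0,1,-1,0,0], None, None, Some [0,0,1,1,0,0,0,0], Some [0,0,1,1,0,0,0,0], None, Some [0,0,1,1,0,0,0,0], None, Some [0,0,1,1,0,0,0,0], None, None, Some [0,0,0,0,1,-1,0,0], Some [0,0,0,0,1,-1,0,0], None, Some [1,-1,0,0,0,0,0,0], None, Some [1,-1,0,0,0,0,0,0], Some [1,-1,0,0,0,0,0,0], Some [1,-1,0,0,0,0,0,0], None, Some [1,-1,0,0,0,0,0,0], None, None, None, None, Some [1,-1,0,0,0,0,0,0], Some [1,-1,0,0,0,0,0,0], Some [1,-1,0,0,0,0,0,0], Some [1,-1,0,0,0,0,0,0],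 Some [1,-1,0,0,0,0,0,0], Some [1,-1,0,0,0,0,0,0], None, Some [1,-1,0,0,0,0,0,0], None, None, None, None, None, None, Some [1,-1,0,0,0,0,0,0], Some [1,-1,0,0,0,0,0,0], Some [1,-1,0,0,0,0,0,0], Some [1,-1,0,0,0,0,0,0], None, Some [1,-1,0,0,0,0,0,0], None, None, None, Some [0,0,0,0,1,-1,0,0], None, None, None, None, None, None, Some [0,0,0,0,1,-1,0,0], Some [0,0,1,1,0,0,0,0], Some [0,0,1,1,0,0,0,0], Some [0,0,1,1,0,0,0,0], None, Some [0,0,1,1,0,0,0,0], None, None, None, None, None, None, Some [0,0,1,1,0,0,0,0], None, Some [0,0,1,1,0,0,0,0], Some [0,0,1,1,0,0,0,0], Some [0,0,1,1,0,0,0,0], Some [0,0,0,0,1,-1,0,0], None, None, None, None, None, None, Some [0,0,0,0,1,-1,0,0]]"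

definition CN12 :: "int list option list" where "CN12 = [None, Some [1,-1,0,0,0,0,0,0], Some [1,-1,0,0,0,0,0,0], None, None, Some [1,-1,0,0,0,0,0,0], Some [1,-1,0,0,0,0,0,0], None, None, Some [1,-1,0,0,0,0,0,0], Some [1,-1,0,0,0,0,0,0], None, None, Some [1,-1,0,0,0,0,0,0], Some [1,-1,0,0,0,0,0,0], None, None, Some [1,-1,0,0,0,0,0,0], None, Some [1,-1,0,0,0,0,0,0], Some [1,-1,0,0,0,0,0,0], None, None, Some [1,-1,0,0,0,0,0,0], Some [1,-1,0,0,0,0,0,0], None, Some [1,-1,0,0,0,0,0,0], None, None, Some [1,-1,0,0,0,0,0,0], Some [0,0,1,1,0,0,0,0], None, None, Some [0,0,1,1,0,0,0,0], Some [0,0,1,1,0,0,0,0], None, Some [0,0,1,1,0,0,0,0], None, None, Some [0,0,0,0,1,-1,0,0], Some [0,0,0,0,1,-1,0,0], None, Some [0,0,1,1,0,0,0,0], None, None, Some [0,0,1,1,0,0,0,0], Some [0,0,1,1,0,0,0,0], None, Some [0,0,1,1,0,0,0,0], None, None, Some [0,0,0,0,1,-1,0,0], Some [0,0,0,0,1,-1,0,0], None, Some [1,-1,0,0,0,0,0,0], None, Some [1,-1,0,0,0,0,0,0], Some [1,-1,0,0,0,0,0,0], None, Some [1,-1,0,0,0,0,0,0], None, Some [1,-1,0,0,0,0,0,0], None, None, Some [1,-1,0,0,0,0,0,0], None, Some [1,-1,0,0,0,0,0,0], Some [1,-1,0,0,0,0,0,0], Some [1,-1,0,0,0,0,0,0],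 Some [1,-1,0,0,0,0,0,0], None, Some [1,-1,0,0,0,0,0,0], None, Some [1,-1,0,0,0,0,0,0], None, None, None, None, Some [1,-1,0,0,0,0,0,0], None, Some [1,-1,0,0,0,0,0,0], Some [1,-1,0,0,0,0,0,0], None, Some [1,-1,0,0,0,0,0,0], None, Some [1,-1,0,0,0,0,0,0], None, None, None, Some [0,0,0,0,1,-1,0,0], None, None, None, None, Some [0,0,0,0,1,-1,0,0], None, Some [0,0,1,1,0,0,0,0], Some [0,0,1,1,0,0,0,0], None, Some [0,0,1,1,0,0,0,0], None, Some [0,0,1,1,0,0,0,0], None, None, None, None, Some [0,0,1,1,0,0,0,0], None, Some [0,0,1,1,0,0,0,0], None, Some [0,0,1,1,0,0,0,0], Some [0,0,1,1,0,0,0,0], None, Some [0,0,0,0,1,-1,0,0], None, None, None, None, Some [0,0,0,0,1,-1,0,0], None]"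

definition CN13 :: "int list option list" where "CN13 = [Some [1,-1,0,0,0,0,0,0], None, None, Some [1,-1,0,0,0,0,0,0], None, Some [1,-1,0,0,0,0,0,0], Some [1,-1,0,0,0,0,0,0], None, Some [1,-1,0,0,0,0,0,0], None, None, Some [1,-1,0,0,0,0,0,0], None, Some [1,-1,0,0,0,0,0,0], None, Some [1,-1,0,0,0,0,0,0], Some [1,-1,0,0,0,0,0,0], None, None, Some [1,-1,0,0,0,0,0,0], Some [1,-1,0,0,0,0,0,0], None, Some [1,-1,0,0,0,0,0,0], None, None, Some [1,-1,0,0,0,0,0,0], Some [1,-1,0,0,0,0,0,0], None, None, Some [1,-1,0,0,0,0,0,0], Some [0,0,1,1,0,0,0,0], None, Some [0,0,1,1,0,0,0,0], None, None, Some [0,0,1,1,0,0,0,0], Some [0,0,1,1,0,0,0,0], None, None, Some [0,0,0,0,1,1,0,0], Some [0,0,0,0,1,1,0,0], None, Some [0,0,1,1,0,0,0,0], None, Some [0,0,1,1,0,0,0,0], None, None, Some [0,0,1,1,0,0,0,0], Some [0,0,1,1,0,0,0,0], None, None, Some [0,0,0,0,1,1,0,0], Some [0,0,0,0,1,1,0,0], None, Some [1,-1,0,0,0,0,0,0], None, Some [1,-1,0,0,0,0,0,0], None, Some [1,-1,0,0,0,0,0,0], Some [1,-1,0,0,0,0,0,0], None, None, Some [1,-1,0,0,0,0,0,0], None, Some [1,-1,0,0,0,0,0,0], Some [1,-1,0,0,0,0,0,0], None, Some [1,-1,0,0,0,0,0,0], Some [1,-1,0,0,0,0,0,0], None, Some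 [1,-1,0,0,0,0,0,0], Some [1,-1,0,0,0,0,0,0], None, None, Some [1,-1,0,0,0,0,0,0], None, None, Some [1,-1,0,0,0,0,0,0], None, None, Some [1,-1,0,0,0,0,0,0], None, Some [1,-1,0,0,0,0,0,0], Some [1,-1,0,0,0,0,0,0], None, None, Some [1,-1,0,0,0,0,0,0], None, None, None, Some [0,0,0,0,1,1,0,0], None, None, Some [0,0,0,0,1,1,0,0], None, None, Some [0,0,1,1,0,0,0,0], None, Some [0,0,1,1,0,0,0,0], Some [0,0,1,1,0,0,0,0], None, None, Some [0,0,1,1,0,0,0,0], None, None, Some [0,0,1,1,0,0,0,0], None, None, Some [0,0,1,1,0,0,0,0], Some [0,0,1,1,0,0,0,0], None, Some [0,0,1,1,0,0,0,0], None, None, Some [0,0,0,0,1,1,0,0], None, None, Some [0,0,0,0,1,1,0,0], None, None]"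

definition CN14 :: "int list option list" where "CN14 = [Some [1,-1,0,0,0,0,0,0], None, Some [1,-1,0,0,0,0,0,0], None, Some [1,-1,0,0,0,0,0,0], None, None, Some [1,-1,0,0,0,0,0,0], None, Some [1,-1,0,0,0,0,0,0], None, Some [1,-1,0,0,0,0,0,0], Some [1,-1,0,0,0,0,0,0], None, Some [1,-1,0,0,0,0,0,0], None, Some [1,-1,0,0,0,0,0,0], None, None, Some [1,-1,0,0,0,0,0,0], None, Some [1,-1,0,0,0,0,0,0], None, Some [1,-1,0,0,0,0,0,0], None, Some [1,-1,0,0,0,0,0,0], Some [1,-1,0,0,0,0,0,0], None, None, Some [1,-1,0,0,0,0,0,0], None, Some [0,0,1,1,0,0,0,0], None, Some [0,0,1,1,0,0,0,0], None, Some [0,0,1,1,0,0,0,0], Some [0,0,1,1,0,0,0,0], None, None, Some [0,0,0,0,1,1,0,0], Some [0,0,0,0,1,1,0,0], None, None, Some [0,0,1,1,0,0,0,0], None, Some [0,0,1,1,0,0,0,0], None, Some [0,0,1,1,0,0,0,0], Some [0,0,1,1,0,0,0,0], None, None, Some [0,0,0,0,1,1,0,0], Some [0,0,0,0,1,1,0,0], None, Some [1,-1,0,0,0,0,0,0], None, None, Some [1,-1,0,0,0,0,0,0], Some [1,-1,0,0,0,0,0,0], Some [1,-1,0,0,0,0,0,0], None, None, None, Some [1,-1,0,0,0,0,0,0], Some [1,-1,0,0,0,0,0,0], Some [1,-1,0,0,0,0,0,0], Some [1,-1,0,0,0,0,0,0], None, None, Some [1,-1,0,0,0,0,0,0], Some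 [1,-1,0,0,0,0,0,0], Some [1,-1,0,0,0,0,0,0], None, None, None, Some [1,-1,0,0,0,0,0,0], Some [1,-1,0,0,0,0,0,0], None, None, None, None, Some [1,-1,0,0,0,0,0,0], Some [1,-1,0,0,0,0,0,0], Some [1,-1,0,0,0,0,0,0], None, None, None, Some [1,-1,0,0,0,0,0,0], None, None, None, Some [0,0,0,0,1,1,0,0], Some [0,0,0,0,1,1,0,0], None, None, None, None, Some [0,0,1,1,0,0,0,0], Some [0,0,1,1,0,0,0,0], Some [0,0,1,1,0,0,0,0], None, None, None, Some [0,0,1,1,0,0,0,0], Some [0,0,1,1,0,0,0,0], None, None, None, Some [0,0,1,1,0,0,0,0], Some [0,0,1,1,0,0,0,0], Some [0,0,1,1,0,0,0,0], None, None, None, None, Some [0,0,0,0,1,1,0,0], Some [0,0,0,0,1,1,0,0], None, None, None]"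

definition CNL :: "int list option list list" where "CNL = [CN0, CN1, CN2, CN3, CN4, CN5, CN6, CN7, CN8, CN9, CN10, CN11, CN12, CN13, CN14]"

fun rowok :: "nat \<Rightarrow> nat \<Rightarrow> (bool \<times> (nat \<times> nat \<times> nat)) list \<Rightarrow> bool" where
  "rowok i j [] = True"
| "rowok i j ((c0,K)#rest) = (K \<in> Lset \<and> chk (Rl!i) (Rl!j) c0 K \<and> rowok i (Suc j) rest)"

fun wok :: "int list list \<Rightarrow> (nat \<times> (nat \<times> nat \<times> nat) \<times> bool) list \<Rightarrow> bool" where
  "wok [] [] = True"
| "wok (x#xs) ((i,C,b)#ws) = (i < 15 \<and> C \<in> Lset \<and> x = (if b then neg (BB C (Rl!i)) else BB C (Rl!i)) \<and> wok xs ws)"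
| "wok _ _ = False"


lemma RLh_eq: "en1p 8 2 @ filter (\<lambda>x. prod_list x = 1) (map (Cons 1) (en2 7)) = RLh"
  by (simp add: RLh_def numeral_eq_Suc)

lemma wok_chk: "wok RLh Wl"
  by (simp add: RLh_def Wl_def Rl_def BB_def pa_def Lset_mem neg_def)

lemma row_chk0: "rowok 0 (Suc 0) (ROWS!0)"
  by (simp add: ROWS_def ROW0_def Rl_def chk_def L16_def lam_def chi_def pa_def Lset_mem)

lemma row_chk1: "rowok 1 (Suc 1) (ROWS!1)"
  by (simp add: ROWS_def ROW1_def Rl_def chk_def L16_def lam_def chi_def pa_def Lset_mem)

lemma row_chk2: "rowok 2 (Suc 2) (ROWS!2)"
  by (simp add: ROWS_def ROW2_def Rl_def chk_def L16_def lam_def chi_def pa_def Lset_mem)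

lemma row_chk3: "rowok 3 (Suc 3) (ROWS!3)"
  by (simp add: ROWS_def ROW3_def Rl_def chk_def L16_def lam_def chi_def pa_def Lset_mem)

lemma row_chk4: "rowok 4 (Suc 4) (ROWS!4)"
  by (simp add: ROWS_def ROW4_def Rl_def chk_def L16_def lam_def chi_def pa_def Lset_mem)

lemma row_chk5: "rowok 5 (Suc 5) (ROWS!5)"
  by (simp add: ROWS_def ROW5_def Rl_def chk_def L16_def lam_def chi_def pa_def Lset_mem)

lemma row_chk6: "rowok 6 (Suc 6) (ROWS!6)"
  by (simp add: ROWS_def ROW6_def Rl_def chk_def L16_def lam_def chi_def pa_def Lset_mem)

lemma row_chk7: "rowok 7 (Suc 7) (ROWS!7)"
  by (simp add: ROWS_def ROW7_def Rl_def chk_def L16_def lam_def chi_def pa_def Lset_mem)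

lemma row_chk8: "rowok 8 (Suc 8) (ROWS!8)"
  by (simp add: ROWS_def ROW8_def Rl_def chk_def L16_def lam_def chi_def pa_def Lset_mem)

lemma row_chk9: "rowok 9 (Suc 9) (ROWS!9)"
  by (simp add: ROWS_def ROW9_def Rl_def chk_def L16_def lam_def chi_def pa_def Lset_mem)

lemma row_chk10: "rowok 10 (Suc 10) (ROWS!10)"
  by (simp add: ROWS_def ROW10_def Rl_def chk_def L16_def lam_def chi_def pa_def Lset_mem)

lemma row_chk11: "rowok 11 (Suc 11) (ROWS!11)"
  by (simp add: ROWS_def ROW11_def Rl_def chk_def L16_def lam_def chi_def pa_def Lset_mem)

lemma row_chk12: "rowok 12 (Suc 12) (ROWS!12)"
  by (simp add: ROWS_def ROW12_def Rl_def chk_def L16_def lam_def chi_def pa_def Lset_mem)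

lemma row_chk13: "rowok 13 (Suc 13) (ROWS!13)"
  by (simp add: ROWS_def ROW13_def Rl_def chk_def L16_def lam_def chi_def pa_def Lset_mem)

lemma row_chk14: "rowok 14 (Suc 14) (ROWS!14)"
  by (simp add: ROWS_def ROW14_def Rl_def chk_def L16_def lam_def chi_def pa_def Lset_mem)

lemma cn_chk0: "list_all2 (cnok (Rl!0) (Zl!0)) RLh (CNL!0)"
  by (simp add: CNL_def CN0_def Rl_def Zl_def RLh_def cnok_def neg_def)

lemma cn_chk1: "list_all2 (cnok (Rl!1) (Zl!1)) RLh (CNL!1)"
  by (simp add: CNL_def CN1_def Rl_def Zl_def RLh_def cnok_def neg_def)

lemma cn_chk2: "list_all2 (cnok (Rl!2) (Zl!2)) RLh (CNL!2)"
  by (simp add: CNL_def CN2_def Rl_def Zl_def RLh_def cnok_def neg_def)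

lemma cn_chk3: "list_all2 (cnok (Rl!3) (Zl!3)) RLh (CNL!3)"
  by (simp add: CNL_def CN3_def Rl_def Zl_def RLh_def cnok_def neg_def)

lemma cn_chk4: "list_all2 (cnok (Rl!4) (Zl!4)) RLh (CNL!4)"
  by (simp add: CNL_def CN4_def Rl_def Zl_def RLh_def cnok_def neg_def)

lemma cn_chk5: "list_all2 (cnok (Rl!5) (Zl!5)) RLh (CNL!5)"
  by (simp add: CNL_def CN5_def Rl_def Zl_def RLh_def cnok_def neg_def)

lemma cn_chk6: "list_all2 (cnok (Rl!6) (Zl!6)) RLh (CNL!6)"
  by (simp add: CNL_def CN6_def Rl_def Zl_def RLh_def cnok_def neg_def)

lemma cn_chk7: "list_all2 (cnok (Rl!7) (Zl!7)) RLh (CNL!7)"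
  by (simp add: CNL_def CN7_def Rl_def Zl_def RLh_def cnok_def neg_def)

lemma cn_chk8: "list_all2 (cnok (Rl!8) (Zl!8)) RLh (CNL!8)"
  by (simp add: CNL_def CN8_def Rl_def Zl_def RLh_def cnok_def neg_def)

lemma cn_chk9: "list_all2 (cnok (Rl!9) (Zl!9)) RLh (CNL!9)"
  by (simp add: CNL_def CN9_def Rl_def Zl_def RLh_def cnok_def neg_def)

lemma cn_chk10: "list_all2 (cnok (Rl!10) (Zl!10)) RLh (CNL!10)"
  by (simp add: CNL_def CN10_def Rl_def Zl_def RLh_def cnok_def neg_def)

lemma cn_chk11: "list_all2 (cnok (Rl!11) (Zl!11)) RLh (CNL!11)"
  by (simp add: CNL_def CN11_def Rl_def Zl_def RLh_def cnok_def neg_def)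

lemma cn_chk12: "list_all2 (cnok (Rl!12) (Zl!12)) RLh (CNL!12)"
  by (simp add: CNL_def CN12_def Rl_def Zl_def RLh_def cnok_def neg_def)

lemma cn_chk13: "list_all2 (cnok (Rl!13) (Zl!13)) RLh (CNL!13)"
  by (simp add: CNL_def CN13_def Rl_def Zl_def RLh_def cnok_def neg_def)

lemma cn_chk14: "list_all2 (cnok (Rl!14) (Zl!14)) RLh (CNL!14)"
  by (simp add: CNL_def CN14_def Rl_def Zl_def RLh_def cnok_def neg_def)

lemma Rl_roots: "list_all (\<lambda>r. r \<in> e8_roots) Rl"
  by (simp add: Rl_def e8_roots_def)

lemma Zl_ok: "list_all2 (\<lambda>r Z. list_all (\<lambda>z. z \<in> e8_roots \<and> ipL r z = 0) Z) Rl Zl"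
  by (simp add: Rl_def Zl_def e8_roots_def)

lemma len_ROWS: "list_all2 (\<lambda>i r. length r = 14 - i) [0,1,2,3,4,5,6,7,8,9,10,11,12,13,14] ROWS"
  by (simp add: ROWS_def ROW0_def ROW1_def ROW2_def ROW3_def ROW4_def ROW5_def ROW6_def ROW7_def ROW8_def ROW9_def ROW10_def ROW11_def ROW12_def ROW13_def ROW14_def)




lemma less15: "i < (15::nat) \<Longrightarrow> i = 0 \<or> i = 1 \<or> i = 2 \<or> i = 3 \<or> i = 4 \<or> i = 5 \<or> i = 6 \<or> i = 7 \<or> i = 8 \<or> i = 9 \<or> i = 10 \<or> i = 11 \<or> i = 12 \<or> i = 13 \<or> i = 14"
  by arith

lemma row_all: "i < 15 \<Longrightarrow> rowok i (Suc i) (ROWS!i)"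
  apply (drule less15)
  apply (elim disjE)
  by (simp_all only: row_chk0 row_chk1 row_chk2 row_chk3 row_chk4 row_chk5 row_chk6 row_chk7 row_chk8 row_chk9 row_chk10 row_chk11 row_chk12 row_chk13 row_chk14)

lemma cn_all: "i < 15 \<Longrightarrow> list_all2 (cnok (Rl!i) (Zl!i)) RLh (CNL!i)"
  apply (drule less15)
  apply (elim disjE)
  by (simp_all only: cn_chk0 cn_chk1 cn_chk2 cn_chk3 cn_chk4 cn_chk5 cn_chk6 cn_chk7 cn_chk8 cn_chk9 cn_chk10 cn_chk11 cn_chk12 cn_chk13 cn_chk14)

lemma len_rows: "i < 15 \<Longrightarrow> length (ROWS!i) = 14 - i"
  using len_ROWS by (auto simp: list_all2_conv_all_nth dest!: less15)

lemma rowok_sound: "rowok i j0 xs \<Longrightarrow> j0 \<le> j \<Longrightarrow> j < j0 + length xs \<Longrightarrow> \<exists>c0 K. K \<in> Lset \<and> chk (Rl!i) (Rl!j) c0 K"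
proof (induct xs arbitrary: j0)
  case Nil then show ?case by simp
next
  case (Cons a xs)
  obtain c0 K where a: "a = (c0,K)" by (cases a)
  show ?case
  proof (cases "j = j0")
    case True then show ?thesis using Cons.prems a by (simp only: rowok.simps) blast
  next
    case False
    then have "rowok i (Suc j0) xs" "Suc j0 \<le> j" "j < Suc j0 + length xs" using Cons.prems a by auto
    then show ?thesis using Cons.hyps by blast
  qed
qed

lemma pair_tab: "i < j \<Longrightarrow> j < 15 \<Longrightarrow> \<exists>c0 K. K \<in> Lset \<and> chk (Rl!i) (Rl!j) c0 K"
  using rowok_sound[OF row_all[of i], of j] len_rows[of i] by simp

lemma chk3_mem: "chk3 c0 K p2 p3 w LV \<Longrightarrow> (p1,v) \<in> set LV \<Longrightarrow> (ipL v w = 0) = (c0 \<noteq> lam K (p1,p2,p3))"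
  by (induct c0 K p2 p3 w LV rule: chk3.induct) auto
lemma chk2_mem: "chk2 r' c0 K LV ps \<Longrightarrow> (p2,p3) \<in> set ps \<Longrightarrow> chk3 c0 K p2 p3 (r2 p2 (r3 p3 r')) LV"
  by (induct r' c0 K LV ps rule: chk2.induct) auto

lemma chk_sound: assumes "chk r r' c0 K" "(p1,p2,p3) \<in> Lset"
  shows "(ipL (r1 p1 r) (r2 p2 (r3 p3 r')) = 0) = (c0 \<noteq> lam K (p1,p2,p3))"
proof -
  have le: "p1 \<le> 3" "p2 \<le> 3" "p3 \<le> 3" using assms(2) by (simp_all add: Lset_mem)
  have m16: "(p2,p3) \<in> set L16"
    using le3[OF le(2)] le3[OF le(3)] unfolding L16_def by (elim disjE) simp_all
  have c3: "chk3 c0 K p2 p3 (r2 p2 (r3 p3 r')) [(0, r1 0 r), (1, r1 1 r), (2, r1 2 r), (3, r1 3 r)]"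
    by (rule chk2_mem[OF assms(1)[unfolded chk_def] m16])
  have m4: "(p1, r1 p1 r) \<in> set [(0, r1 0 r), (1, r1 1 r), (2, r1 2 r), (3, r1 3 r)]"
    using le3[OF le(1)] by (elim disjE) simp_all
  show ?thesis by (rule chk3_mem[OF c3 m4])
qed

lemma r1_zero: "length x = 8 \<Longrightarrow> r1 0 x = x" by (auto dest!: len8 simp: pa_def)

lemma r1_adj: assumes "length x = 8" "length y = 8" "m \<le> 3"
  shows "(ip x (r1 m y) = 0) = (ip (r1 m x) y = 0)"
proof -
  have "ip (r1 m x) y = ip (r1 m (r1 m x)) (r1 m y)" using assms by (simp add: r1_ip)
  moreover have "pm (r1 m (r1 m x)) x"
    using r1_sq[OF assms(1), of m m] assms(3) le3[OF assms(3)] by (auto simp: mul1_self r1_zero[OF assms(1)])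
  ultimately show ?thesis using ip_pm1 assms by simp
qed

lemma Rl_len: "length Rl = 15" by (simp add: Rl_def)
lemma Zl_len: "length Zl = 15" by (simp add: Zl_def)
lemma Rl_root: "i < 15 \<Longrightarrow> Rl!i \<in> e8_roots"
  using Rl_roots Rl_len by (simp add: list_all_length)
lemma Zl_root: "i < 15 \<Longrightarrow> z \<in> set (Zl!i) \<Longrightarrow> z \<in> e8_roots \<and> ipL (Rl!i) z = 0"
  using Zl_ok Rl_len Zl_len by (auto simp: list_all2_conv_all_nth list_all_iff)

lemma TBL: assumes "i < j" "j < 15"
  shows "\<exists>c0 K. K \<in> Lset \<and> (\<forall>P\<in>Lset. (ip (Rl!i) (BB P (Rl!j)) = 0) = (c0 \<noteq> lam K P))"
proof -
  obtain c0 K where K: "K \<in> Lset" "chk (Rl!i) (Rl!j) c0 K" using pair_tab assms by blast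
  have li: "length (Rl!i) = 8" "length (Rl!j) = 8" using Rl_root root_len assms by auto
  have "(ip (Rl!i) (BB P (Rl!j)) = 0) = (c0 \<noteq> lam K P)" if P: "P \<in> Lset" for P
  proof -
    obtain p1 p2 p3 where Pd: "P = (p1,p2,p3)" by (cases P)
    have le: "p1 \<le> 3" using P Pd by (auto simp: Lset_mem)
    have "(ip (Rl!i) (BB P (Rl!j)) = 0) = (ip (Rl!i) (r1 p1 (r2 p2 (r3 p3 (Rl!j)))) = 0)"
      by (simp add: Pd BB_def)
    also have "\<dots> = (ip (r1 p1 (Rl!i)) (r2 p2 (r3 p3 (Rl!j))) = 0)"
      using r1_adj li le by simp
    also have "\<dots> = (ipL (r1 p1 (Rl!i)) (r2 p2 (r3 p3 (Rl!j))) = 0)"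
      using li by (simp add: ip_ipL)
    also have "\<dots> = (c0 \<noteq> lam K P)" using chk_sound[OF K(2)] P Pd by simp
    finally show ?thesis .
  qed
  then show ?thesis using K by blast
qed

lemma KEY1: assumes "i < j" "j < 15"
  shows "\<exists>c0 K. K \<in> Lset \<and> (\<forall>P Q u v. P \<in> Lset \<longrightarrow> Q \<in> Lset \<longrightarrow> pm u (BB P (Rl!i)) \<longrightarrow> pm v (BB Q (Rl!j))
           \<longrightarrow> (ip u v = 0) = (c0 \<noteq> (lam K P \<noteq> lam K Q)))"
proof -
  obtain c0 K where K: "K \<in> Lset" "\<forall>P\<in>Lset. (ip (Rl!i) (BB P (Rl!j)) = 0) = (c0 \<noteq> lam K P)"
    using TBL[OF assms] by blast
  have li: "length (Rl!i) = 8" "length (Rl!j) = 8" using Rl_root root_len assms by auto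
  have "(ip u v = 0) = (c0 \<noteq> (lam K P \<noteq> lam K Q))"
    if h: "P \<in> Lset" "Q \<in> Lset" "pm u (BB P (Rl!i))" "pm v (BB Q (Rl!j))" for P Q u v
  proof -
    have "(ip u v = 0) = (ip (BB P (Rl!i)) v = 0)" using ip_pm1[OF h(3)] li by simp
    also have "\<dots> = (ip (BB P (Rl!i)) (BB Q (Rl!j)) = 0)" using ip_pm2[OF h(4)] li by simp
    also have "\<dots> = (ip (Rl!i) (BB P (BB Q (Rl!j))) = 0)" using BB_adj[OF h(1)] li by simp
    also have "\<dots> = (ip (Rl!i) (BB (mulL P Q) (Rl!j)) = 0)"
      using ip_pm2[OF BB_mul[OF h(1,2) li(2)]] li by simp
    also have "\<dots> = (c0 \<noteq> lam K (mulL P Q))" using K(2) mulL_Lset[OF h(1,2)] by blast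
    also have "\<dots> = (c0 \<noteq> (lam K P \<noteq> lam K Q))" using lam_mul[OF K(1) h(1,2)] by simp
    finally show ?thesis .
  qed
  then show ?thesis using K(1) by blast
qed

lemma KEY: assumes "i < 15" "j < 15" "i \<noteq> j"
  shows "\<exists>c0 K. K \<in> Lset \<and> (\<forall>P Q u v. P \<in> Lset \<longrightarrow> Q \<in> Lset \<longrightarrow> pm u (BB P (Rl!i)) \<longrightarrow> pm v (BB Q (Rl!j))
           \<longrightarrow> (ip u v = 0) = (c0 \<noteq> (lam K P \<noteq> lam K Q)))"
proof (cases "i < j")
  case True then show ?thesis using KEY1 assms by blast
next
  case False
  then have "j < i" using assms by simp
  from KEY1[OF this assms(1)] obtain c0 K where K: "K \<in> Lset" "\<forall>P Q u v. P \<in> Lset \<longrightarrow> Q \<in> Lset \<longrightarrow> pm u (BB P (Rl!j)) \<longrightarrow> pm v (BB Q (Rl!i))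
           \<longrightarrow> (ip u v = 0) = (c0 \<noteq> (lam K P \<noteq> lam K Q))" by blast
  have "(ip u v = 0) = (c0 \<noteq> (lam K P \<noteq> lam K Q))"
    if h: "P \<in> Lset" "Q \<in> Lset" "pm u (BB P (Rl!i))" "pm v (BB Q (Rl!j))" for P Q u v
  proof -
    have "(ip u v = 0) = (ip v u = 0)" by (simp add: ip_comm)
    also have "\<dots> = (c0 \<noteq> (lam K Q \<noteq> lam K P))" using K(2) h by blast
    finally show ?thesis by auto
  qed
  then show ?thesis using K(1) by blast
qed




lemma sum_nz_neg: "sum_list (map nz (neg xs)) = sum_list (map nz xs)"
  by (induct xs) (simp_all add: neg_def)

lemma nz_vals: "nz 0 = 0" "nz 1 = 1" "nz (-1) = 1" by (simp_all add: nz_def)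
lemma neg_inj: "neg x = neg y \<Longrightarrow> x = y" by (metis neg_neg)

lemma neg_Cons: "neg (a # xs) = (-a) # neg xs" by (simp add: neg_def)

lemma en1_comp: "set x \<subseteq> {-1,0,1} \<Longrightarrow> x \<in> set (en1 (length x) (sum_list (map nz x)))"
proof (induct x)
  case Nil then show ?case by simp
next
  case (Cons a xs)
  then have a: "a = -1 \<or> a = 0 \<or> a = 1" and IH: "xs \<in> set (en1 (length xs) (sum_list (map nz xs)))" by auto
  show ?case
  proof (cases "sum_list (map nz xs)")
    case 0 then show ?thesis using a IH by (auto simp: nz_vals simp del: sum_list_eq_0_iff)
  next
    case (Suc s) then show ?thesis using a IH by (auto simp: nz_vals)
  qed
qed

lemma en1p_comp: "set x \<subseteq> {-1,0,1} \<Longrightarrow> 0 < sum_list (map nz x) \<Longrightarrow>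
   x \<in> set (en1p (length x) (sum_list (map nz x))) \<or> neg x \<in> set (en1p (length x) (sum_list (map nz x)))"
proof (induct x)
  case Nil then show ?case by simp
next
  case (Cons a xs)
  then have a: "a = -1 \<or> a = 0 \<or> a = 1" and xs3: "set xs \<subseteq> {-1,0,1}" by auto
  have c1: "xs \<in> set (en1 (length xs) (sum_list (map nz xs)))" using en1_comp[OF xs3] .
  have xs3n: "set (neg xs) \<subseteq> {-1,0,1}" using xs3 by (auto simp: neg_def)
  have c2: "neg xs \<in> set (en1 (length xs) (sum_list (map nz xs)))"
    using en1_comp[OF xs3n] by (simp add: sum_nz_neg)
  consider "a = 0" | "a = 1" | "a = -1" using a by blast
  then show ?case
  proof cases
    case 1
    then have pos: "0 < sum_list (map nz xs)" using Cons.prems by (simp add: nz_vals)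
    then obtain s where s: "sum_list (map nz xs) = Suc s" using gr0_implies_Suc by blast
    have "xs \<in> set (en1p (length xs) (Suc s)) \<or> neg xs \<in> set (en1p (length xs) (Suc s))"
      using Cons.hyps[OF xs3 pos] s by simp
    then show ?thesis using 1 s by (auto simp: nz_vals neg_Cons)
  next
    case 2 then show ?thesis using c1 by (simp add: nz_vals)
  next
    case 3 then show ?thesis using c2 by (simp add: nz_vals neg_Cons)
  qed
qed

lemma en2_comp: "set x \<subseteq> {-1,1} \<Longrightarrow> x \<in> set (en2 (length x))"
  by (induct x) auto

lemma prod_neg: "prod_list (neg x) = (-1)^length x * prod_list x"
  by (induct x) (simp_all add: neg_def)

lemma root_half: assumes "x \<in> e8_roots" shows "x \<in> set RLh \<or> neg x \<in> set RLh"
proof -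
  have len: "length x = 8" using root_len[OF assms] .
  have RL: "set RLh = set (en1p 8 2) \<union> set (filter (\<lambda>x. prod_list x = 1) (map (Cons 1) (en2 7)))"
    unfolding RLh_eq[symmetric] by simp
  show ?thesis
  proof (cases "set x \<subseteq> {-1,0,1} \<and> length (filter (\<lambda>a. a \<noteq> 0) x) = 2")
    case True
    then have "sum_list (map nz x) = 2" "set x \<subseteq> {-1,0,1}" by (simp_all add: len_filter_nz)
    then show ?thesis using en1p_comp[of x] len RL by auto
  next
    case False
    then have t2: "set x \<subseteq> {-1,1}" "prod_list x = 1" using assms by (auto simp: e8_roots_def)
    obtain a xs where x: "x = a # xs" using len by (cases x) auto
    have lxs: "length xs = 7" using len x by simp
    have a: "a = 1 \<or> a = -1" and xs2: "set xs \<subseteq> {-1,1}" using t2(1) x by auto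
    have xsn: "set (neg xs) \<subseteq> {-1,1}" using xs2 by (auto simp: neg_def)
    show ?thesis
    proof (cases "a = 1")
      case True
      have "xs \<in> set (en2 7)" using en2_comp[OF xs2] lxs by simp
      then have "x \<in> set (filter (\<lambda>x. prod_list x = 1) (map (Cons 1) (en2 7)))" using True x t2(2) by auto
      then show ?thesis using RL by blast
    next
      case False
      then have am: "a = -1" using a by simp
      have "neg xs \<in> set (en2 7)" using en2_comp[OF xsn] lxs by (simp add: neg_def)
      moreover have "prod_list (neg x) = 1" using prod_neg[of x] len t2(2) by simp
      moreover have "neg x = 1 # neg xs" using x am by (simp add: neg_Cons)
      ultimately have "neg x \<in> set (filter (\<lambda>x. prod_list x = 1) (map (Cons 1) (en2 7)))" by auto
      then show ?thesis using RL by blast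
    qed
  qed
qed

lemma wok_sound: "wok xs ws \<Longrightarrow> x \<in> set xs \<Longrightarrow> \<exists>i<15. \<exists>C\<in>Lset. pm x (BB C (Rl!i))"
proof (induct xs ws rule: wok.induct)
  case (2 y ys i C b ws)
  show ?case
  proof (cases "x = y")
    case True
    then show ?thesis using 2 by (auto simp: pm_def split: if_splits)
  next
    case False then show ?thesis using 2 by auto
  qed
qed auto

lemma pm_negl: "pm (neg x) y \<Longrightarrow> pm x y" unfolding pm_def using neg_inj neg_neg by metis

lemma cover: "x \<in> e8_roots \<Longrightarrow> \<exists>i<15. \<exists>C\<in>Lset. pm x (BB C (Rl!i))"
  using root_half[of x] wok_sound[OF wok_chk] pm_negl by blast


lemma RLh_len_roots: "v \<in> set RLh \<Longrightarrow> length v = 8"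
  by (auto simp: RLh_def)

lemma CN: assumes u: "u \<in> e8_roots" and v: "v \<in> e8_roots" and nz0: "ip u v \<noteq> 0" and npm: "\<not> pm v u"
  shows "\<exists>z\<in>e8_roots. ip u z = 0 \<and> ip z v = 0"
proof -
  obtain i C where i: "i < 15" and C: "C \<in> Lset" and pu: "pm u (BB C (Rl!i))" using cover[OF u] by blast
  have ri: "Rl!i \<in> e8_roots" using Rl_root[OF i] .
  have lri: "length (Rl!i) = 8" using root_len[OF ri] .
  have lv: "length v = 8" using root_len[OF v] .
  have lu: "length u = 8" using root_len[OF u] .
  define v' where "v' = BB C v"
  have v'r: "v' \<in> e8_roots" unfolding v'_def using BB_root[OF v] .
  have lv': "length v' = 8" using root_len[OF v'r] .
  obtain v'' where v''s: "v'' \<in> set RLh" and pv: "pm v'' v'"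
    using root_half[OF v'r] pm_refl[of v'] unfolding pm_def by (metis neg_neg)
  have lv'': "length v'' = 8" using RLh_len_roots[OF v''s] .
  obtain n where n: "n < length RLh" "RLh ! n = v''" using v''s by (metis in_set_conv_nth)
  have la: "list_all2 (cnok (Rl!i) (Zl!i)) RLh (CNL!i)" using cn_all[OF i] .
  then have ok: "cnok (Rl!i) (Zl!i) v'' (CNL!i!n)" using n by (auto simp: list_all2_conv_all_nth)
  have ipri: "ip (Rl!i) v'' \<noteq> 0"
  proof
    assume "ip (Rl!i) v'' = 0"
    then have "ip (Rl!i) v' = 0" using ip_pm2[OF pv] lv' by simp
    then have "ip (BB C (Rl!i)) v = 0" unfolding v'_def using BB_adj[OF C lri lv] by simp
    then have "ip u v = 0" using ip_pm1[OF pu] lri by simp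
    then show False using nz0 by simp
  qed
  have nri: "\<not> pm v'' (Rl!i)"
  proof
    assume "pm v'' (Rl!i)"
    then have "pm v' (Rl!i)" using pv pm_sym pm_trans by blast
    then have "pm (BB C v') (BB C (Rl!i))" using pm_BB lri by blast
    moreover have "pm (BB C v') v" unfolding v'_def
      using BB_mul[OF C C lv] mulL_self[of C] BB_id[OF lv] by simp
    ultimately have "pm v (BB C (Rl!i))" using pm_sym pm_trans by blast
    then have "pm v u" using pu pm_sym pm_trans by blast
    then show False using npm by simp
  qed
  obtain z where zs: "z \<in> set (Zl!i)" and zv: "ipL z v'' = 0"
  proof (cases "CNL!i!n")
    case None
    then have "ipL (Rl!i) v'' = 0 \<or> v'' = Rl!i \<or> v'' = neg (Rl!i)" using ok by (simp add: cnok_def)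
    then show ?thesis using ipri nri lri lv'' by (auto simp: ip_ipL pm_def)
  next
    case (Some z)
    then have "z \<in> set (Zl!i) \<and> ipL z v'' = 0" using ok by (simp add: cnok_def)
    then show ?thesis using that by blast
  qed
  have zr: "z \<in> e8_roots" and zri: "ipL (Rl!i) z = 0" using Zl_root[OF i zs] by auto
  have lz: "length z = 8" using root_len[OF zr] .
  define Z where "Z = BB C z"
  have Zr: "Z \<in> e8_roots" unfolding Z_def using BB_root[OF zr] .
  have "ip (BB C (Rl!i)) Z = ip (Rl!i) z" unfolding Z_def using BB_ip lri lz by simp
  then have "ip (BB C (Rl!i)) Z = 0" using zri lri lz by (simp add: ip_ipL)
  then have uZ: "ip u Z = 0" using ip_pm1[OF pu] lri by simp
  have "ip z v'' = 0" using zv lz lv'' by (simp add: ip_ipL)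
  then have "ip z v' = 0" using ip_pm2[OF pv] lv' by simp
  then have Zv: "ip Z v = 0" unfolding Z_def v'_def using BB_adj[OF C lz lv] by simp
  show ?thesis using Zr uZ Zv by blast
qed

lemma dist_eq: "u \<in> e8_roots \<Longrightarrow> v \<in> e8_roots \<Longrightarrow> vert u \<noteq> vert v \<Longrightarrow>
   e8_dist (vert u) (vert v) = (if ip u v = 0 then 1 else 2)"
  by (rule dist_lemma[OF CN])

lemma orbit_eq: assumes x: "x \<in> e8_roots" and r: "r \<in> e8_roots" and C: "C \<in> Lset" and p: "pm x (BB C r)"
  shows "L_orbit (vert x) = L_orbit (vert r)"
proof -
  have lx: "length x = 8" using root_len[OF x] .
  have lr: "length r = 8" using root_len[OF r] .
  have key: "vmap M (vert x) = vmap (mulL M C) (vert r)" if M: "M \<in> Lset" for M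
  proof -
    have "pm (BB M x) (BB M (BB C r))" using pm_BB[OF p] lr by simp
    moreover have "pm (BB M (BB C r)) (BB (mulL M C) r)" using BB_mul[OF M C lr] .
    ultimately have "vert (BB M x) = vert (BB (mulL M C) r)" using pm_trans pm_vert by blast
    then show ?thesis using vmap_vert[OF M lx] vmap_vert[OF mulL_Lset[OF M C] lr] by simp
  qed
  show ?thesis
  proof
    show "L_orbit (vert x) \<subseteq> L_orbit (vert r)"
      unfolding L_orbit_def using key mulL_Lset[OF _ C] by blast
    show "L_orbit (vert r) \<subseteq> L_orbit (vert x)"
    proof
      fix q assume "q \<in> L_orbit (vert r)"
      then obtain P where P: "P \<in> Lset" "q = vmap P (vert r)" unfolding L_orbit_def by blast
      have "vmap (mulL P C) (vert x) = q" using key[OF mulL_Lset[OF P(1) C]] mulL_cancel[OF P(1) C] P(2) by simp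
      then show "q \<in> L_orbit (vert x)" unfolding L_orbit_def using mulL_Lset[OF P(1) C] by blast
    qed
  qed
qed


lemma vert_obt: "k \<in> e8_vertices \<Longrightarrow> \<exists>x\<in>e8_roots. k = vert x"
  by (auto simp: e8_vertices_def)

theorem lemma3p7:
  fixes k s l t :: "int list set" and wi wj :: "int list"
    and M N :: "nat \<times> nat \<times> nat"
  assumes "k \<in> e8_vertices" and "l \<in> e8_vertices"
    and "s \<in> L_orbit k" and "t \<in> L_orbit l"
    and "L_orbit k \<noteq> L_orbit l"
    and "wi \<in> e8_roots" and "vert wi \<in> L_orbit k"
    and "wj \<in> e8_roots" and "vert wj \<in> L_orbit l"
    and "M \<in> Lset" and "vmap M k = s"
    and "N \<in> Lset" and "vmap N l = t"
  shows "(e8_dist k l = e8_dist s t \<longrightarrow>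
            (proj (act M wi) * proj (act N wj) = 0\<^sub>m 8 8 \<longleftrightarrow> ip wi wj = 0))
       \<and> (e8_dist k l \<noteq> e8_dist s t \<longrightarrow>
            (proj (act M wi) * proj (act N wj) = 0\<^sub>m 8 8 \<longleftrightarrow> ip wi wj \<noteq> 0))"
proof -
  obtain x where x: "x \<in> e8_roots" "k = vert x" using vert_obt[OF assms(1)] by blast
  obtain y where y: "y \<in> e8_roots" "l = vert y" using vert_obt[OF assms(2)] by blast
  have lx: "length x = 8" "length y = 8" using root_len x y by auto
  obtain i C where i: "i < 15" and C: "C \<in> Lset" and px: "pm x (BB C (Rl!i))" using cover[OF x(1)] by blast
  obtain j D where j: "j < 15" and D: "D \<in> Lset" and py: "pm y (BB D (Rl!j))" using cover[OF y(1)] by blast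
  have ri: "Rl!i \<in> e8_roots" "Rl!j \<in> e8_roots" using Rl_root i j by auto
  have lri: "length (Rl!i) = 8" "length (Rl!j) = 8" using root_len ri by auto
  have ok: "L_orbit k = L_orbit (vert (Rl!i))" using orbit_eq[OF x(1) ri(1) C px] x(2) by simp
  have ol: "L_orbit l = L_orbit (vert (Rl!j))" using orbit_eq[OF y(1) ri(2) D py] y(2) by simp
  have ij: "i \<noteq> j" using assms(5) ok ol by auto
  have s: "s = vert (BB M x)" using assms(11) vmap_vert[OF assms(10) lx(1)] x(2) by simp
  have t: "t = vert (BB N y)" using assms(13) vmap_vert[OF assms(12) lx(2)] y(2) by simp
  have pMx: "pm (BB M x) (BB (mulL M C) (Rl!i))"
    using pm_trans[OF pm_BB[OF px BB_len[OF lri(1)]] BB_mul[OF assms(10) C lri(1)]] .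
  have pNy: "pm (BB N y) (BB (mulL N D) (Rl!j))"
    using pm_trans[OF pm_BB[OF py BB_len[OF lri(2)]] BB_mul[OF assms(12) D lri(2)]] .
  have MC: "mulL M C \<in> Lset" "mulL N D \<in> Lset" using mulL_Lset assms(10,12) C D by auto
  have Mxr: "BB M x \<in> e8_roots" "BB N y \<in> e8_roots" using BB_root x(1) y(1) by auto
  have os: "L_orbit s = L_orbit (vert (Rl!i))" using orbit_eq[OF Mxr(1) ri(1) MC(1) pMx] s by simp
  have ot: "L_orbit t = L_orbit (vert (Rl!j))" using orbit_eq[OF Mxr(2) ri(2) MC(2) pNy] t by simp
  have kl: "vert x \<noteq> vert y" using ok ol ij assms(5) x(2) y(2) by auto
  have st: "vert (BB M x) \<noteq> vert (BB N y)" using os ot ok ol assms(5) s t by auto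
  have d1: "e8_dist k l = (if ip x y = 0 then 1 else 2)" using dist_eq[OF x(1) y(1) kl] x(2) y(2) by simp
  have d2: "e8_dist s t = (if ip (BB M x) (BB N y) = 0 then 1 else 2)" using dist_eq[OF Mxr st] s t by simp
  obtain A where A: "A \<in> Lset" "vert wi = vmap A k" using assms(7) unfolding L_orbit_def by blast
  obtain B where B: "B \<in> Lset" "vert wj = vmap B l" using assms(9) unfolding L_orbit_def by blast
  have pwi: "pm wi (BB A x)" using A vmap_vert[OF A(1) lx(1)] x(2) vert_pm by simp
  have pwj: "pm wj (BB B y)" using B vmap_vert[OF B(1) lx(2)] y(2) vert_pm by simp
  have pwi2: "pm wi (BB (mulL A C) (Rl!i))"
    using pm_trans[OF pwi pm_trans[OF pm_BB[OF px BB_len[OF lri(1)]] BB_mul[OF A(1) C lri(1)]]] .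
  have pwj2: "pm wj (BB (mulL B D) (Rl!j))"
    using pm_trans[OF pwj pm_trans[OF pm_BB[OF py BB_len[OF lri(2)]] BB_mul[OF B(1) D lri(2)]]] .
  have AC: "mulL A C \<in> Lset" "mulL B D \<in> Lset" using mulL_Lset A(1) B(1) C D by auto
  have lw: "length (BB (mulL A C) (Rl!i)) = 8" "length (BB (mulL B D) (Rl!j)) = 8" using lri by auto
  have lwi: "length wi = 8" "length wj = 8" using root_len assms(6,8) by auto
  have pMwi: "pm (BB M wi) (BB (mulL M (mulL A C)) (Rl!i))"
    using pm_trans[OF pm_BB[OF pwi2 lw(1)] BB_mul[OF assms(10) AC(1) lri(1)]] .
  have pNwj: "pm (BB N wj) (BB (mulL N (mulL B D)) (Rl!j))"
    using pm_trans[OF pm_BB[OF pwj2 lw(2)] BB_mul[OF assms(12) AC(2) lri(2)]] .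
  have MAC: "mulL M (mulL A C) \<in> Lset" "mulL N (mulL B D) \<in> Lset" using mulL_Lset assms(10,12) AC by auto
  obtain c0 K where K: "K \<in> Lset" and T: "\<And>P Q u v. P \<in> Lset \<Longrightarrow> Q \<in> Lset \<Longrightarrow> pm u (BB P (Rl!i)) \<Longrightarrow> pm v (BB Q (Rl!j))
           \<Longrightarrow> (ip u v = 0) = (c0 \<noteq> (lam K P \<noteq> lam K Q))" using KEY[OF i j ij] by blast
  have o1: "(ip x y = 0) = (c0 \<noteq> (lam K C \<noteq> lam K D))" using T[OF C D px py] .
  have o2: "(ip (BB M x) (BB N y) = 0) = (c0 \<noteq> ((lam K M \<noteq> lam K C) \<noteq> (lam K N \<noteq> lam K D)))"
    using T[OF MC pMx pNy] lam_mul[OF K assms(10) C] lam_mul[OF K assms(12) D] by simp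
  have o3: "(ip wi wj = 0) = (c0 \<noteq> ((lam K A \<noteq> lam K C) \<noteq> (lam K B \<noteq> lam K D)))"
    using T[OF AC pwi2 pwj2] lam_mul[OF K A(1) C] lam_mul[OF K B(1) D] by simp
  have o4: "(ip (BB M wi) (BB N wj) = 0) = (c0 \<noteq> ((lam K M \<noteq> (lam K A \<noteq> lam K C)) \<noteq> (lam K N \<noteq> (lam K B \<noteq> lam K D))))"
    using T[OF MAC pMwi pNwj] lam_mul[OF K assms(10) AC(1)] lam_mul[OF K assms(12) AC(2)]
      lam_mul[OF K A(1) C] lam_mul[OF K B(1) D] by simp
  have wr: "BB M wi \<in> e8_roots" "BB N wj \<in> e8_roots" using BB_root assms(6,8) by auto
  have pr: "(proj (act M wi) * proj (act N wj) = 0\<^sub>m 8 8) = (ip (BB M wi) (BB N wj) = 0)"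
    using proj_lemma[of "BB M wi" "BB N wj"] act_BB[OF assms(10) lwi(1)] act_BB[OF assms(12) lwi(2)]
      root_len[OF wr(1)] root_len[OF wr(2)] root_ip[OF wr(1)] root_ip[OF wr(2)] by simp
  have dd: "(e8_dist k l = e8_dist s t) = ((ip x y = 0) = (ip (BB M x) (BB N y) = 0))"
    unfolding d1 d2 by simp
  show ?thesis unfolding dd pr o1 o2 o3 o4 by blast
qed


end
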